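(* For any $k\in\mathbb{Z}$ with $|k|\geq1$, any $\lambda\in\mathbb{R}$ and any $w\in D_k$, with $F$ defined as in the context, $$\operatorname{Re}\langle F,w\rangle\gtrsim\|w'\|_{L^2}^2+\Big\langle\Big(\frac{k^2}{r^2}+r^2\Big)w,w\Big\rangle,$$ where the implicit constant is independent of $k,\beta_k,\lambda,w$.
   Context: Functions are complex-valued on $r\in(0,\infty)$; $\langle f,g\rangle=\int_0^\infty f\bar g\,dr$, $\|\cdot\|_{L^2}$ the $L^2(0,\infty)$ norm. $\beta_k\in\mathbb{R}$. $D_k$ is the set of $w\in H^2_{loc}(0,\infty)\cap L^2(0,\infty)$ with $-w''+\big(\frac{k^2-1/4}{r^2}+\frac{r^2}{16}-\frac12\big)w+i\beta_k\frac{w}{r^2}\in L^2(0,\infty)$ (for $|k|\ge1$ equivalently $w'',w/r^2,r^2w\in L^2$); such $w$ satisfy $w(0)=w(\infty)=0$. $F=-\big[w''-\big(\frac{k^2-1/4}{r^2}+\frac{r^2}{16}-\frac12\big)w\big]+i\beta_k\big(\frac1{r^2}-\lambda\big)w$. *)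

theory Defs
  imports "HOL-Analysis.Analysis"
begin

definition L2pos :: "(real \<Rightarrow> complex) \<Rightarrow> bool" where
  "L2pos f \<longleftrightarrow> set_borel_measurable lborel {0<..} f \<and>
     set_integrable lborel {0<..} (\<lambda>r. (cmod (f r))\<^sup>2)"

definition ip :: "(real \<Rightarrow> complex) \<Rightarrow> (real \<Rightarrow> complex) \<Rightarrow> complex" where
  "ip f g = (LINT r:{0<..}|lborel. f r * cnj (g r))"

text \<open>w in H^2_loc(0,oo), with classical derivative w1 and weak second derivative w2
  (w1 locally absolutely continuous with locally square integrable derivative w2).\<close>
definition H2loc :: "(real \<Rightarrow> complex) \<Rightarrow> (real \<Rightarrow> complex) \<Rightarrow> (real \<Rightarrow> complex) \<Rightarrow> bool" where
  "H2loc w w1 w2 \<longleftrightarrow>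
     (\<forall>r>0. (w has_vector_derivative w1 r) (at r)) \<and>
     (\<forall>a b. 0 < a \<longrightarrow> a \<le> b \<longrightarrow>
        set_integrable lborel {a..b} w2 \<and>
        set_integrable lborel {a..b} (\<lambda>r. (cmod (w2 r))\<^sup>2) \<and>
        w1 b - w1 a = (LINT r:{a..b}|lborel. w2 r))"

definition pot :: "int \<Rightarrow> real \<Rightarrow> real" where
  "pot k r = (of_int k ^ 2 - 1/4) / r\<^sup>2 + r\<^sup>2 / 16 - 1/2"

definition Lop :: "int \<Rightarrow> real \<Rightarrow> (real \<Rightarrow> complex) \<Rightarrow> (real \<Rightarrow> complex) \<Rightarrow> real \<Rightarrow> complex" where
  "Lop k \<beta> w w2 r = - w2 r + complex_of_real (pot k r) * w r
      + \<i> * complex_of_real \<beta> * w r / complex_of_real (r\<^sup>2)"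

definition Dk :: "int \<Rightarrow> real \<Rightarrow> (real \<Rightarrow> complex) \<Rightarrow> (real \<Rightarrow> complex) \<Rightarrow> (real \<Rightarrow> complex) \<Rightarrow> bool" where
  "Dk k \<beta> w w1 w2 \<longleftrightarrow> H2loc w w1 w2 \<and> L2pos w \<and> L2pos (Lop k \<beta> w w2)"

definition Fop :: "int \<Rightarrow> real \<Rightarrow> real \<Rightarrow> (real \<Rightarrow> complex) \<Rightarrow> (real \<Rightarrow> complex) \<Rightarrow> real \<Rightarrow> complex" where
  "Fop k \<beta> lam w w2 r = - (w2 r - complex_of_real (pot k r) * w r)
      + \<i> * complex_of_real \<beta> * complex_of_real (1 / r\<^sup>2 - lam) * w r"

end

theory Submission
  imports Defs
begin

locale wsetup =
  fixes k :: int and \<beta> :: real and w w1 w2 :: "real \<Rightarrow> complex"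
  assumes D: "Dk k \<beta> w w1 w2"
begin

lemma wder: "r > 0 \<Longrightarrow> (w has_vector_derivative w1 r) (at r)"
  using D unfolding Dk_def H2loc_def by auto

lemma w2int: "0 < a \<Longrightarrow> a \<le> b \<Longrightarrow> set_integrable lborel {a..b} w2"
  using D unfolding Dk_def H2loc_def by auto

lemma w2sqint: "0 < a \<Longrightarrow> a \<le> b \<Longrightarrow> set_integrable lborel {a..b} (\<lambda>r. (cmod (w2 r))\<^sup>2)"
  using D unfolding Dk_def H2loc_def by auto

lemma w1eq: "0 < a \<Longrightarrow> a \<le> b \<Longrightarrow> w1 b - w1 a = (LINT r:{a..b}|lborel. w2 r)"
  using D unfolding Dk_def H2loc_def by auto

lemma w_cont: "continuous_on {0<..} w"
proof -
  have "isCont w r" if "r > 0" for r using has_vector_derivative_continuous[OF wder[OF that]] .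
  thus ?thesis by (simp add: continuous_at_imp_continuous_on)
qed

lemma w1_cont_Icc: assumes "0 < a" "a \<le> b" shows "continuous_on {a..b} w1"
proof -
  have i: "w2 integrable_on {a..b}" by (rule set_borel_integral_eq_integral(1)[OF w2int[OF assms]])
  have c: "continuous_on {a..b} (\<lambda>x. integral {a..x} w2)"
    using indefinite_integral_continuous_1[OF i] .
  have "\<And>x. x \<in> {a..b} \<Longrightarrow> w1 x = w1 a + integral {a..x} w2"
  proof -
    fix x assume x: "x \<in> {a..b}"
    have "set_integrable lborel {a..x} w2" using w2int[of a x] assms x by auto
    hence "(LINT r:{a..x}|lborel. w2 r) = integral {a..x} w2" by (rule set_borel_integral_eq_integral(2))
    thus "w1 x = w1 a + integral {a..x} w2" using w1eq[of a x] assms x by (auto simp: algebra_simps)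
  qed
  note eq = this
  have c2: "continuous_on {a..b} (\<lambda>x. w1 a + integral {a..x} w2)"
    using continuous_on_add[OF continuous_on_const c] by simp
  show ?thesis by (rule continuous_on_eq[OF c2]) (use eq in \<open>metis\<close>)
qed

lemma w1_cont: "continuous_on {0<..} w1"
proof -
  have "isCont w1 r" if r: "r > 0" for r
  proof -
    have "continuous_on {r/2..2*r} w1" using w1_cont_Icc r by auto
    moreover have "r \<in> interior {r/2..2*r}" using r by auto
    ultimately show ?thesis by (rule continuous_on_interior)
  qed
  thus ?thesis by (simp add: continuous_at_imp_continuous_on)
qed

end

lemma set_integrable_mult_cont:
  fixes f c :: "real \<Rightarrow> 'a::{real_normed_field, second_countable_topology, banach}"
  assumes f: "set_integrable lborel {a..b} f" and c: "continuous_on {a..b} c"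
  shows "set_integrable lborel {a..b} (\<lambda>s. f s * c s)"
proof -
  obtain M where M: "\<And>x. x \<in> {a..b} \<Longrightarrow> norm (c x) \<le> M"
    using compact_imp_bounded[OF compact_continuous_image[OF c compact_Icc]]
    unfolding bounded_iff by (metis imageI)
  have fm: "(\<lambda>x. indicator {a..b} x *\<^sub>R f x) \<in> borel_measurable lborel"
    using f unfolding set_integrable_def by auto
  have cm: "(\<lambda>x. indicator {a..b} x *\<^sub>R c x) \<in> borel_measurable lborel"
    using borel_measurable_continuous_on_indicator[OF _ c] by simp
  have meas: "set_borel_measurable lborel {a..b} (\<lambda>s. f s * c s)"
  proof -
    have "(\<lambda>x. indicator {a..b} x *\<^sub>R (f x * c x)) = (\<lambda>x. (indicator {a..b} x *\<^sub>R f x) * (indicator {a..b} x *\<^sub>R c x))"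
      by (auto simp: indicator_def)
    thus ?thesis unfolding set_borel_measurable_def using borel_measurable_times[OF fm cm] by simp
  qed
  have integ: "set_integrable lborel {a..b} (\<lambda>s. of_real M * f s)"
    using f by (rule set_integrable_mult_right)
  have AE: "AE x in lborel. x \<in> {a..b} \<longrightarrow> norm (f x * c x) \<le> norm (of_real M * f x)"
  proof -
    show "AE x in lborel. x \<in> {a..b} \<longrightarrow> norm (f x * c x) \<le> norm (of_real M * f x)"
    proof (rule AE_I2, rule impI)
      fix x assume x: "x \<in> {a..b}"
      have "M \<ge> 0" using M[OF x] norm_ge_zero order_trans by blast
      have "norm (f x * c x) = norm (f x) * norm (c x)" by (simp add: norm_mult)
      also have "\<dots> \<le> norm (f x) * M" using M[OF x] by (simp add: mult_left_mono)
      also have "\<dots> = norm (of_real M * f x)" using \<open>M \<ge> 0\<close> by (simp add: norm_mult)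
      finally show "norm (f x * c x) \<le> norm (of_real M * f x)" .
    qed
  qed
  show ?thesis by (rule set_integrable_bound[OF integ meas AE])
qed

context wsetup begin

lemma w1_int: "0 < a \<Longrightarrow> a \<le> b \<Longrightarrow> set_integrable lborel {a..b} w1"
  by (rule borel_integrable_atLeastAtMost'[OF w1_cont_Icc])

lemma cnjw_ftc:
  assumes "0 < a" "a \<le> s"
  shows "cnj (w s) = cnj (w a) + (LINT t:{a..s}|lborel. cnj (w1 t))"
proof -
  have c: "continuous_on {a..s} (\<lambda>t. cnj (w1 t))"
    using w1_cont_Icc[OF assms] by (intro continuous_intros)
  have "(LBINT t=a..s. cnj (w1 t)) = cnj (w s) - cnj (w a)"
  proof (rule interval_integral_FTC_finite)
    show "continuous_on {min a s..max a s} (\<lambda>t. cnj (w1 t))" using c assms by simp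
    fix x assume "min a s \<le> x" "x \<le> max a s"
    hence "x > 0" using assms by auto
    show "((\<lambda>t. cnj (w t)) has_vector_derivative cnj (w1 x)) (at x within {min a s..max a s})"
      using has_vector_derivative_cnj[OF wder[OF \<open>x > 0\<close>]] has_vector_derivative_at_within by blast
  qed
  thus ?thesis using interval_integral_Icc[OF assms(2), of "\<lambda>t. cnj (w1 t)"] by simp
qed


lemma fubini_step:
  assumes ab: "0 < a" "a \<le> b"
  shows "(LINT s:{a..b}|lborel. w2 s * (LINT t:{a..s}|lborel. cnj (w1 t)))
       = (LINT t:{a..b}|lborel. cnj (w1 t) * (w1 b - w1 t))"
proof -
  define f where "f s = indicator {a..b} s *\<^sub>R w2 s" for s
  define g where "g t = indicator {a..b} t *\<^sub>R cnj (w1 t)" for t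
  have fi: "integrable lborel f" using w2int[OF ab] unfolding f_def set_integrable_def .
  have gi: "integrable lborel g"
  proof -
    have "set_integrable lborel {a..b} (\<lambda>t. cnj (w1 t))"
      by (rule borel_integrable_atLeastAtMost') (use w1_cont_Icc[OF ab] in \<open>intro continuous_intros\<close>)
    thus ?thesis unfolding g_def set_integrable_def .
  qed
  have fm[measurable]: "f \<in> borel_measurable lborel" using fi by auto
  have gm[measurable]: "g \<in> borel_measurable lborel" using gi by auto
  define G where "G s t = (if t \<le> s then f s * g t else 0)" for s t
  have Gm: "(\<lambda>(s,t). G s t) \<in> borel_measurable (lborel \<Otimes>\<^sub>M lborel)"
    unfolding G_def by measurable
  have Hi: "integrable (lborel \<Otimes>\<^sub>M lborel) (\<lambda>(s,t). norm (f s) * norm (g t))"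
    apply (rule lborel_pair.Fubini_integrable)
    subgoal by measurable
    subgoal using integrable_mult_right[OF integrable_norm[OF fi], of "LINT y|lborel. norm (g y)"]
      by (simp add: mult.commute)
    subgoal using integrable_norm[OF gi] by simp
    done
  have Gi: "integrable (lborel \<Otimes>\<^sub>M lborel) (\<lambda>(s,t). G s t)"
    by (rule Bochner_Integration.integrable_bound[OF Hi Gm]) (auto simp: G_def norm_mult)
  have "(LBINT t. (LBINT s. G s t)) = (LBINT s. (LBINT t. G s t))"
    using lborel_pair.Fubini_integral[OF Gi] .
  moreover have "(LBINT s. (LBINT t. G s t)) = (LINT s:{a..b}|lborel. w2 s * (LINT t:{a..s}|lborel. cnj (w1 t)))"
  proof -
    have "(LBINT t. G s t) = indicator {a..b} s *\<^sub>R (w2 s * (LINT t:{a..s}|lborel. cnj (w1 t)))" for s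
    proof (cases "s \<in> {a..b}")
      case True
      have "(LBINT t. G s t) = (LBINT t. f s * (indicator {a..s} t *\<^sub>R cnj (w1 t)))"
        using True by (intro Bochner_Integration.integral_cong) (auto simp: G_def g_def split: split_indicator)
      also have "\<dots> = f s * (LINT t:{a..s}|lborel. cnj (w1 t))"
        unfolding set_lebesgue_integral_def by (simp only: integral_mult_right_zero[symmetric] mult_scaleR_right)
      finally show ?thesis using True by (simp add: f_def)
    next
      case False
      hence "f s = 0" unfolding f_def by simp
      hence "(\<lambda>t. G s t) = (\<lambda>t. 0)" unfolding G_def by auto
      thus ?thesis using False by simp
    qed
    thus ?thesis unfolding set_lebesgue_integral_def by simp
  qed
  moreover have "(LBINT t. (LBINT s. G s t)) = (LINT t:{a..b}|lborel. cnj (w1 t) * (w1 b - w1 t))"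
  proof -
    have "(LBINT s. G s t) = indicator {a..b} t *\<^sub>R (cnj (w1 t) * (w1 b - w1 t))" for t
    proof (cases "t \<in> {a..b}")
      case True
      have "(LBINT s. G s t) = (LBINT s. g t * (indicator {t..b} s *\<^sub>R w2 s))"
        using True by (intro Bochner_Integration.integral_cong) (auto simp: G_def f_def mult.commute split: split_indicator)
      also have "\<dots> = g t * (LINT s:{t..b}|lborel. w2 s)"
        unfolding set_lebesgue_integral_def by (simp only: integral_mult_right_zero[symmetric] mult_scaleR_right)
      also have "\<dots> = g t * (w1 b - w1 t)" using w1eq[of t b] True ab by auto
      finally show ?thesis using True by (simp add: g_def)
    next
      case False
      hence "g t = 0" unfolding g_def by simp
      hence "(\<lambda>s. G s t) = (\<lambda>s. 0)" unfolding G_def by auto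
      thus ?thesis using False by simp
    qed
    thus ?thesis unfolding set_lebesgue_integral_def by simp
  qed
  ultimately show ?thesis by simp
qed

lemma w2_mult_cont: "0 < a \<Longrightarrow> a \<le> b \<Longrightarrow> continuous_on {a..b} c \<Longrightarrow> set_integrable lborel {a..b} (\<lambda>s. w2 s * c s)"
  by (rule set_integrable_mult_cont[OF w2int])

lemma w_cont_Icc: "0 < a \<Longrightarrow> continuous_on {a..b} w"
  by (rule continuous_on_subset[OF w_cont]) auto

lemma ibp:
  assumes ab: "0 < a" "a \<le> b"
  shows "(LINT s:{a..b}|lborel. w2 s * cnj (w s))
       = w1 b * cnj (w b) - w1 a * cnj (w a) - (LINT t:{a..b}|lborel. w1 t * cnj (w1 t))"
proof -
  have cw1: "continuous_on {a..b} (\<lambda>t. cnj (w1 t))" using w1_cont_Icc[OF ab] by (intro continuous_intros)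
  have cw: "continuous_on {a..b} (\<lambda>t. cnj (w t))" using w_cont_Icc[OF ab(1)] by (intro continuous_intros)
  have i1: "set_integrable lborel {a..b} (\<lambda>s. w2 s * cnj (w a))"
    using w2int[OF ab] by (rule set_integrable_mult_left)
  have i2: "set_integrable lborel {a..b} (\<lambda>s. w2 s * (cnj (w s) - cnj (w a)))"
    by (rule w2_mult_cont[OF ab]) (use cw w_cont_Icc[OF ab(1)] in \<open>intro continuous_intros\<close>)
  have "(LINT s:{a..b}|lborel. w2 s * cnj (w s))
      = (LINT s:{a..b}|lborel. w2 s * cnj (w a) + w2 s * (cnj (w s) - cnj (w a)))"
    by (intro set_lebesgue_integral_cong) (auto simp: algebra_simps)
  also have "\<dots> = (LINT s:{a..b}|lborel. w2 s * cnj (w a)) + (LINT s:{a..b}|lborel. w2 s * (cnj (w s) - cnj (w a)))"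
    using i1 i2 by (rule set_integral_add)
  also have "(LINT s:{a..b}|lborel. w2 s * cnj (w a)) = (w1 b - w1 a) * cnj (w a)"
    using w1eq[OF ab] by simp
  also have "(LINT s:{a..b}|lborel. w2 s * (cnj (w s) - cnj (w a)))
      = (LINT s:{a..b}|lborel. w2 s * (LINT t:{a..s}|lborel. cnj (w1 t)))"
  proof (intro set_lebesgue_integral_cong allI impI)
    fix s assume "s \<in> {a..b}"
    hence "cnj (w s) = cnj (w a) + (LINT t:{a..s}|lborel. cnj (w1 t))" using cnjw_ftc[of a s] ab by auto
    thus "w2 s * (cnj (w s) - cnj (w a)) = w2 s * (LINT t:{a..s}|lborel. cnj (w1 t))" by simp
  qed simp
  also have "\<dots> = (LINT t:{a..b}|lborel. cnj (w1 t) * (w1 b - w1 t))"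
    by (rule fubini_step[OF ab])
  also have "\<dots> = (LINT t:{a..b}|lborel. cnj (w1 t) * w1 b - w1 t * cnj (w1 t))"
    by (intro set_lebesgue_integral_cong) (auto simp: algebra_simps)
  also have "\<dots> = (LINT t:{a..b}|lborel. cnj (w1 t) * w1 b) - (LINT t:{a..b}|lborel. w1 t * cnj (w1 t))"
  proof (rule set_integral_diff)
    show "set_integrable lborel {a..b} (\<lambda>t. cnj (w1 t) * w1 b)"
      by (rule borel_integrable_atLeastAtMost') (use cw1 w1_cont_Icc[OF ab] in \<open>intro continuous_intros\<close>)
    show "set_integrable lborel {a..b} (\<lambda>t. w1 t * cnj (w1 t))"
      by (rule borel_integrable_atLeastAtMost') (use cw1 w1_cont_Icc[OF ab] in \<open>intro continuous_intros\<close>)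
  qed
  also have "(LINT t:{a..b}|lborel. cnj (w1 t) * w1 b) = (cnj (w b) - cnj (w a)) * w1 b"
  proof -
    have "(LINT t:{a..b}|lborel. cnj (w1 t) * w1 b) = (LINT t:{a..b}|lborel. cnj (w1 t)) * w1 b"
      by simp
    also have "(LINT t:{a..b}|lborel. cnj (w1 t)) = cnj (w b) - cnj (w a)"
      using cnjw_ftc[OF ab] by simp
    finally show ?thesis .
  qed
  finally show ?thesis by (simp add: algebra_simps)
qed

end

lemma set_integral_Re:
  assumes "set_integrable M A (f :: _ \<Rightarrow> complex)"
  shows "set_integrable M A (\<lambda>x. Re (f x))" "(LINT x:A|M. Re (f x)) = Re (LINT x:A|M. f x)"
proof -
  have i: "integrable M (\<lambda>x. indicator A x *\<^sub>R f x)" using assms unfolding set_integrable_def .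
  have e: "(\<lambda>x. indicator A x *\<^sub>R Re (f x)) = (\<lambda>x. Re (indicator A x *\<^sub>R f x))" by (auto simp: fun_eq_iff)
  show "set_integrable M A (\<lambda>x. Re (f x))" unfolding set_integrable_def e using integrable_Re[OF i] .
  show "(LINT x:A|M. Re (f x)) = Re (LINT x:A|M. f x)" unfolding set_lebesgue_integral_def e
    using integral_Re[OF i] .
qed

lemma set_integrable_uminus:
  fixes f :: "_ \<Rightarrow> real"
  shows "set_integrable M A f \<Longrightarrow> set_integrable M A (\<lambda>x. - f x)"
  unfolding set_integrable_def using integrable_minus[of M "\<lambda>x. indicator A x *\<^sub>R f x"] by simp

context wsetup begin

definition rho :: "real \<Rightarrow> real" where "rho r = (cmod (w r))\<^sup>2"
definition drho :: "real \<Rightarrow> real" where "drho r = 2 * Re (w1 r * cnj (w r))"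
definition hh :: "real \<Rightarrow> real" where "hh r = - Re (w2 r * cnj (w r)) + pot k r * rho r"
definition Bf :: "(real \<Rightarrow> real) \<Rightarrow> real \<Rightarrow> real" where "Bf g r = Re (w1 r * cnj (w r)) + g r * rho r"
definition Jf :: "(real \<Rightarrow> real) \<Rightarrow> (real \<Rightarrow> real) \<Rightarrow> real \<Rightarrow> real" where
  "Jf g g' r = (cmod (w1 r))\<^sup>2 + g r * drho r + (pot k r + g' r) * rho r"

lemma rho_nonneg: "rho r \<ge> 0" by (simp add: rho_def)

lemma rho_der: assumes "r > 0" shows "(rho has_real_derivative drho r) (at r)"
proof -
  have "((\<lambda>x. w x * cnj (w x)) has_vector_derivative (w r * cnj (w1 r) + w1 r * cnj (w r))) (at r)"
    by (intro has_vector_derivative_mult has_vector_derivative_cnj wder assms)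
  from bounded_linear.has_vector_derivative[OF bounded_linear_Re this]
  have "((\<lambda>x. Re (w x * cnj (w x))) has_vector_derivative Re (w r * cnj (w1 r) + w1 r * cnj (w r))) (at r)" .
  moreover have "(\<lambda>x. Re (w x * cnj (w x))) = rho"
    unfolding rho_def by (auto simp: fun_eq_iff complex_norm_square[symmetric])
  moreover have "Re (w r * cnj (w1 r) + w1 r * cnj (w r)) = drho r"
    unfolding drho_def by (simp add: algebra_simps)
  ultimately show ?thesis by (simp add: has_real_derivative_iff_has_vector_derivative)
qed

lemma rho_cont: "continuous_on {0<..} rho"
  unfolding rho_def by (intro continuous_intros w_cont)

lemma drho_cont: "continuous_on {0<..} drho"
  unfolding drho_def by (intro continuous_intros w_cont w1_cont)

lemma pot_cont: "continuous_on {0<..} (pot k)"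
  unfolding pot_def by (intro continuous_intros) auto

lemma cont_sub: "continuous_on {0<..} f \<Longrightarrow> 0 < (a::real) \<Longrightarrow> continuous_on {a..b} f"
  by (rule continuous_on_subset) auto

lemma hh_int: assumes "0 < a" "a \<le> b" shows "set_integrable lborel {a..b} hh"
proof -
  have i0: "set_integrable lborel {a..b} (\<lambda>s. w2 s * cnj (w s))"
    by (rule w2_mult_cont[OF assms]) (use w_cont_Icc[OF assms(1)] in \<open>intro continuous_intros\<close>)
  have i1: "set_integrable lborel {a..b} (\<lambda>s. - Re (w2 s * cnj (w s)))"
    by (rule set_integrable_uminus[OF set_integral_Re(1)[OF i0]])
  have i2: "set_integrable lborel {a..b} (\<lambda>s. pot k s * rho s)"
    by (rule borel_integrable_atLeastAtMost') (use cont_sub[OF pot_cont assms(1)] cont_sub[OF rho_cont assms(1)] in \<open>intro continuous_intros\<close>)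
  show ?thesis unfolding hh_def using set_integral_add(1)[OF i1 i2] by simp
qed

lemma identity:
  assumes gd: "\<And>r. r > 0 \<Longrightarrow> (g has_real_derivative g' r) (at r)"
    and gc: "continuous_on {0<..} g'"
    and ab: "0 < a" "a \<le> b"
  shows "(LINT r:{a..b}|lborel. hh r) = Bf g a - Bf g b + (LINT r:{a..b}|lborel. Jf g g' r)"
proof -
  have gcont: "continuous_on {0<..} g"
    by (metis continuous_at_imp_continuous_on greaterThan_iff DERIV_isCont gd)
  have c1: "continuous_on {a..b} w1" using w1_cont_Icc[OF ab] .
  have c2: "continuous_on {a..b} w" using w_cont_Icc[OF ab(1)] .
  note cs = cont_sub[OF _ ab(1)]
  have cR: "continuous_on {a..b} (\<lambda>r. Re (w1 r * cnj (w1 r)))" using c1 by (intro continuous_intros)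
  have i1: "set_integrable lborel {a..b} (\<lambda>s. w2 s * cnj (w s))"
    by (rule w2_mult_cont[OF ab]) (use c2 in \<open>intro continuous_intros\<close>)
  have i3: "set_integrable lborel {a..b} (\<lambda>t. w1 t * cnj (w1 t))"
    by (rule borel_integrable_atLeastAtMost') (use c1 in \<open>intro continuous_intros\<close>)
  have E1: "(LINT s:{a..b}|lborel. Re (w2 s * cnj (w s)))
        = Re (w1 b * cnj (w b)) - Re (w1 a * cnj (w a)) - (LINT t:{a..b}|lborel. (cmod (w1 t))\<^sup>2)"
  proof -
    have "(LINT s:{a..b}|lborel. Re (w2 s * cnj (w s))) = Re (LINT s:{a..b}|lborel. w2 s * cnj (w s))"
      using set_integral_Re(2)[OF i1] .
    also have "\<dots> = Re (w1 b * cnj (w b)) - Re (w1 a * cnj (w a)) - Re (LINT t:{a..b}|lborel. w1 t * cnj (w1 t))"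
      using ibp[OF ab] by simp
    also have "Re (LINT t:{a..b}|lborel. w1 t * cnj (w1 t)) = (LINT t:{a..b}|lborel. Re (w1 t * cnj (w1 t)))"
      using set_integral_Re(2)[OF i3] by simp
    also have "\<dots> = (LINT t:{a..b}|lborel. (cmod (w1 t))\<^sup>2)"
      by (intro set_lebesgue_integral_cong) (auto simp: complex_norm_square[symmetric])
    finally show ?thesis .
  qed
  have E2: "(LINT r:{a..b}|lborel. g' r * rho r + g r * drho r) = g b * rho b - g a * rho a"
  proof -
    have "(LBINT r=a..b. g' r * rho r + g r * drho r) = g b * rho b - g a * rho a"
    proof (rule interval_integral_FTC_finite)
      show "continuous_on {min a b..max a b} (\<lambda>r. g' r * rho r + g r * drho r)"
        using ab cs[OF gc] cs[OF rho_cont] cs[OF gcont] cs[OF drho_cont] by (auto intro!: continuous_intros)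
      fix x assume "min a b \<le> x" "x \<le> max a b"
      hence x: "x > 0" using ab by auto
      have "((\<lambda>r. g r * rho r) has_real_derivative (g' x * rho x + g x * drho x)) (at x)"
        by (rule DERIV_cong[OF DERIV_mult[OF gd[OF x] rho_der[OF x]]]) simp
      thus "((\<lambda>r. g r * rho r) has_vector_derivative (g' x * rho x + g x * drho x)) (at x within {min a b..max a b})"
        using has_real_derivative_iff_has_vector_derivative has_vector_derivative_at_within by blast
    qed
    thus ?thesis using interval_integral_Icc[OF ab(2), of "\<lambda>r. g' r * rho r + g r * drho r"] by simp
  qed
  have i4: "set_integrable lborel {a..b} (\<lambda>r. g' r * rho r + g r * drho r)"
    by (rule borel_integrable_atLeastAtMost')
       (use ab cs[OF gc] cs[OF rho_cont] cs[OF gcont] cs[OF drho_cont] in \<open>auto intro!: continuous_intros\<close>)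
  have i5: "set_integrable lborel {a..b} (\<lambda>r. (cmod (w1 r))\<^sup>2 + pot k r * rho r)"
    by (rule borel_integrable_atLeastAtMost')
       (use c1 cs[OF pot_cont] cs[OF rho_cont] in \<open>auto intro!: continuous_intros\<close>)
  have i6: "set_integrable lborel {a..b} (\<lambda>r. (cmod (w1 r))\<^sup>2)"
    by (rule borel_integrable_atLeastAtMost') (use c1 in \<open>auto intro!: continuous_intros\<close>)
  have i7: "set_integrable lborel {a..b} (\<lambda>r. pot k r * rho r)"
    by (rule borel_integrable_atLeastAtMost')
       (use cs[OF pot_cont] cs[OF rho_cont] in \<open>auto intro!: continuous_intros\<close>)
  have iR: "set_integrable lborel {a..b} (\<lambda>s. Re (w2 s * cnj (w s)))" using set_integral_Re(1)[OF i1] .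
  have "(LINT r:{a..b}|lborel. hh r) = - (LINT s:{a..b}|lborel. Re (w2 s * cnj (w s))) + (LINT r:{a..b}|lborel. pot k r * rho r)"
    unfolding hh_def using set_integral_add(2)[OF set_integrable_uminus[OF iR] i7] set_integral_uminus[OF iR] by simp
  moreover have "(LINT r:{a..b}|lborel. Jf g g' r) = (LINT r:{a..b}|lborel. (cmod (w1 r))\<^sup>2) + (LINT r:{a..b}|lborel. pot k r * rho r)
        + (LINT r:{a..b}|lborel. g' r * rho r + g r * drho r)"
  proof -
    have "(LINT r:{a..b}|lborel. Jf g g' r) = (LINT r:{a..b}|lborel. ((cmod (w1 r))\<^sup>2 + pot k r * rho r) + (g' r * rho r + g r * drho r))"
      by (intro set_lebesgue_integral_cong) (auto simp: Jf_def algebra_simps)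
    also have "\<dots> = (LINT r:{a..b}|lborel. (cmod (w1 r))\<^sup>2 + pot k r * rho r) + (LINT r:{a..b}|lborel. g' r * rho r + g r * drho r)"
      using set_integral_add(2)[OF i5 i4] .
    also have "(LINT r:{a..b}|lborel. (cmod (w1 r))\<^sup>2 + pot k r * rho r) = (LINT r:{a..b}|lborel. (cmod (w1 r))\<^sup>2) + (LINT r:{a..b}|lborel. pot k r * rho r)"
      using set_integral_add(2)[OF i6 i7] .
    finally show ?thesis .
  qed
  ultimately show ?thesis using E1 E2 unfolding Bf_def by (simp add: algebra_simps)
qed

end

lemma partial_le_total:
  fixes f :: "real \<Rightarrow> real"
  assumes i: "set_integrable lborel {0<..} f" and nn: "\<And>r. r > 0 \<Longrightarrow> f r \<ge> 0" and a: "0 < a"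
  shows "(LINT r:{a..b}|lborel. f r) \<le> (LINT r:{0<..}|lborel. f r)"
proof -
  have i2: "set_integrable lborel {a..b} f"
    by (rule set_integrable_subset[OF i]) (use a in auto)
  show ?thesis unfolding set_lebesgue_integral_def
  proof (rule integral_mono)
    show "integrable lborel (\<lambda>x. indicat_real {a..b} x *\<^sub>R f x)" using i2 unfolding set_integrable_def .
    show "integrable lborel (\<lambda>x. indicat_real {0<..} x *\<^sub>R f x)" using i unfolding set_integrable_def .
    fix x show "indicat_real {a..b} x *\<^sub>R f x \<le> indicat_real {0<..} x *\<^sub>R f x"
      using a nn[of x] by (auto simp: indicator_def)
  qed
qed

lemma ln_integral:
  fixes e d c :: real
  assumes "0 < e" "e \<le> d"
  shows "(LINT r:{e..d}|lborel. c / r) = c * (ln d - ln e)"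
proof -
  have "(LBINT r=e..d. c / r) = c * ln d - c * ln e"
  proof (rule interval_integral_FTC_finite)
    show "continuous_on {min e d..max e d} (\<lambda>r. c / r)" using assms by (intro continuous_intros) auto
    fix x assume "min e d \<le> x" "x \<le> max e d"
    hence x: "x > 0" using assms by auto
    have "((\<lambda>r. c * ln r) has_real_derivative c * (1 / x)) (at x)"
      by (intro derivative_eq_intros) (use x in auto)
    thus "((\<lambda>r. c * ln r) has_vector_derivative c / x) (at x within {min e d..max e d})"
      using has_real_derivative_iff_has_vector_derivative has_vector_derivative_at_within by fastforce
  qed
  thus ?thesis using interval_integral_Icc[OF assms(2), of "\<lambda>r. c / r"] by (simp add: algebra_simps)
qed

lemma NI0:
  fixes f :: "real \<Rightarrow> real"
  assumes i: "set_integrable lborel {0<..} f" and nn: "\<And>r. r > 0 \<Longrightarrow> f r \<ge> 0"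
    and c: "c > 0" and d: "d > 0" and lb: "\<And>r. 0 < r \<Longrightarrow> r \<le> d \<Longrightarrow> c / r \<le> f r"
  shows False
proof -
  define M where "M = (LINT r:{0<..}|lborel. f r)"
  define e where "e = d * exp (- (max M 0 / c + 1))"
  have e0: "e > 0" using d by (simp add: e_def)
  have "max M 0 / c \<ge> 0" using c by simp
  hence "exp (- (max M 0 / c + 1)) \<le> 1" by simp
  hence ed: "e \<le> d" using d unfolding e_def by (simp add: mult_le_cancel_left1)
  have "(LINT r:{e..d}|lborel. c / r) \<le> (LINT r:{e..d}|lborel. f r)"
  proof (rule set_integral_mono)
    show "set_integrable lborel {e..d} (\<lambda>r. c / r)"
      by (rule borel_integrable_atLeastAtMost') (use e0 in \<open>intro continuous_intros, auto\<close>)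
    show "set_integrable lborel {e..d} f" by (rule set_integrable_subset[OF i]) (use e0 in auto)
    fix r assume "r \<in> {e..d}" thus "c / r \<le> f r" using lb e0 by auto
  qed
  also have "\<dots> \<le> M" unfolding M_def by (rule partial_le_total[OF i nn e0])
  finally have "c * (ln d - ln e) \<le> M" using ln_integral[OF e0 ed] by simp
  moreover have "ln d - ln e = max M 0 / c + 1"
    using d by (simp add: e_def ln_mult)
  ultimately have "c * (max M 0 / c + 1) \<le> M" by simp
  hence "max M 0 + c \<le> M" using c by (simp add: algebra_simps)
  thus False using c by linarith
qed

lemma NIinf:
  fixes f :: "real \<Rightarrow> real"
  assumes i: "set_integrable lborel {0<..} f" and nn: "\<And>r. r > 0 \<Longrightarrow> f r \<ge> 0"
    and c: "c > 0" and T: "T > 0" and lb: "\<And>r. T \<le> r \<Longrightarrow> c \<le> f r"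
  shows False
proof -
  define M where "M = (LINT r:{0<..}|lborel. f r)"
  define X where "X = T + max M 0 / c + 1"
  have TX: "T \<le> X" using c by (simp add: X_def)
  have "(LINT r:{T..X}|lborel. c) \<le> (LINT r:{T..X}|lborel. f r)"
  proof (rule set_integral_mono)
    show "set_integrable lborel {T..X} (\<lambda>r. c)"
      by (rule borel_integrable_atLeastAtMost') (intro continuous_intros)
    show "set_integrable lborel {T..X} f" by (rule set_integrable_subset[OF i]) (use T in auto)
    fix r assume "r \<in> {T..X}" thus "c \<le> f r" using lb by auto
  qed
  also have "\<dots> \<le> M" unfolding M_def by (rule partial_le_total[OF i nn T])
  moreover have "(LINT r:{T..X}|lborel. c) = c * (X - T)"
  proof -
    have e1: "(LBINT r=T..X. c) = c * (X - T)" by (rule interval_integral_const(2))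
    show ?thesis using interval_integral_Icc[OF TX, of "\<lambda>r. c"] e1 by metis
  qed
  ultimately have "c * (X - T) \<le> M" by simp
  moreover have "c * (X - T) = max M 0 + c" using c by (simp add: X_def algebra_simps)
  ultimately show False using c by linarith
qed

lemma bounded_partials:
  fixes f :: "real \<Rightarrow> real"
  assumes fc: "continuous_on {0<..} f" and nn: "\<And>r. r > 0 \<Longrightarrow> f r \<ge> 0"
    and bd: "\<And>a b. 0 < a \<Longrightarrow> a \<le> b \<Longrightarrow> (LINT r:{a..b}|lborel. f r) \<le> M"
  shows "set_integrable lborel {0<..} f" "(LINT r:{0<..}|lborel. f r) \<le> M"
proof -
  define F where "F n x = indicator {1/(Suc n)..Suc n} x *\<^sub>R f x" for n :: nat and x :: real
  have Fi: "integrable lborel (F n)" for n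
  proof -
    have p: "0 < 1/real (Suc n)" by simp
    have "continuous_on {1/(Suc n)..real (Suc n)} f"
      by (rule continuous_on_subset[OF fc]) (auto simp: subset_iff intro: less_le_trans[of 0 "1/(1+real n)"])
    from borel_integrable_atLeastAtMost'[OF this] show ?thesis unfolding F_def set_integrable_def .
  qed
  have sub: "{1/real (Suc n)..real (Suc n)} \<subseteq> {1/real (Suc m)..real (Suc m)}" if "n \<le> m" for n m
  proof -
    have "1/real (Suc m) \<le> 1/real (Suc n)" using that by (intro divide_left_mono) auto
    thus ?thesis using that by auto
  qed
  have Fnn: "F m x \<ge> 0" for m x
  proof (cases "x \<in> {1/real (Suc m)..real (Suc m)}")
    case True
    have "0 < 1/real (Suc m)" by simp
    hence "x > 0" using True by (meson atLeastAtMost_iff less_le_trans)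
    thus ?thesis using True nn[of x] by (simp add: F_def)
  qed (simp add: F_def)
  have mono: "mono (\<lambda>n. F n x)" for x
  proof (rule monoI)
    fix n m :: nat assume nm: "n \<le> m"
    show "F n x \<le> F m x"
    proof (cases "x \<in> {1/real (Suc n)..real (Suc n)}")
      case True
      hence "x \<in> {1/real (Suc m)..real (Suc m)}" using sub[OF nm] by blast
      thus ?thesis using True by (simp add: F_def)
    next
      case False
      hence "F n x = 0" by (simp add: F_def)
      thus ?thesis using Fnn[of m x] by simp
    qed
  qed
  have Ib: "integral\<^sup>L lborel (F n) \<le> M" for n
  proof -
    have "1/real (Suc n) \<le> 1" by (simp add: divide_le_eq_1)
    hence "1/real (Suc n) \<le> real (Suc n)" by linarith
    thus ?thesis using bd[of "1/real (Suc n)" "real (Suc n)"] unfolding F_def set_lebesgue_integral_def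
      by simp
  qed
  have Imono: "incseq (\<lambda>n. integral\<^sup>L lborel (F n))"
    by (intro monoI integral_mono Fi) (use mono in \<open>auto simp: mono_def\<close>)
  obtain L where L: "(\<lambda>n. integral\<^sup>L lborel (F n)) \<longlonglongrightarrow> L"
    using incseq_convergent[OF Imono, of M] Ib by blast
  have lim: "(\<lambda>n. F n x) \<longlonglongrightarrow> indicator {0<..} x *\<^sub>R f x" for x
  proof (cases "x > 0")
    case True
    obtain N :: nat where N: "N > max x (1/x)" using reals_Archimedean2 by blast
    have "\<forall>n\<ge>N. F n x = indicator {0<..} x *\<^sub>R f x"
    proof (intro allI impI)
      fix n assume "n \<ge> N"
      hence "real (Suc n) > max x (1/x)" using N by linarith
      hence "x \<le> Suc n" "1 / real (Suc n) \<le> x" using True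
        by (auto simp: field_simps)
      thus "F n x = indicator {0<..} x *\<^sub>R f x" using True by (simp add: F_def)
    qed
    thus ?thesis by (intro tendsto_eventually) (auto simp: eventually_sequentially)
  next
    case False
    have "F n x = 0" for n
    proof -
      have "0 < 1/real (Suc n)" by simp
      hence "x \<notin> {1/real (Suc n)..real (Suc n)}" using False by (meson atLeastAtMost_iff less_le_trans)
      thus ?thesis by (simp add: F_def)
    qed
    thus ?thesis using False by simp
  qed
  have meas: "(\<lambda>x. indicator {0<..} x *\<^sub>R f x) \<in> borel_measurable lborel"
    using borel_measurable_continuous_on_indicator[OF _ fc] by simp
  have "integrable lborel (\<lambda>x. indicator {0<..} x *\<^sub>R f x)"
    by (rule integrable_monotone_convergence[OF Fi _ _ L meas]) (use mono lim in \<open>simp_all\<close>)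
  thus "set_integrable lborel {0<..} f" unfolding set_integrable_def .
  have "integral\<^sup>L lborel (\<lambda>x. indicator {0<..} x *\<^sub>R f x) = L"
    by (rule integral_monotone_convergence[OF Fi _ _ L meas]) (use mono lim in \<open>simp_all\<close>)
  moreover have "L \<le> M" by (rule LIMSEQ_le_const2[OF L]) (use Ib in auto)
  ultimately show "(LINT r:{0<..}|lborel. f r) \<le> M" unfolding set_lebesgue_integral_def by simp
qed

lemma E0:
  fixes \<rho> \<rho>' :: "real \<Rightarrow> real"
  assumes i: "set_integrable lborel {0<..} \<rho>" and nn: "\<And>r. r > 0 \<Longrightarrow> \<rho> r \<ge> 0"
    and der: "\<And>r. r > 0 \<Longrightarrow> (\<rho> has_real_derivative \<rho>' r) (at r)"
    and \<delta>: "\<delta> > 0" and a0: "a0 > 0"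
  shows "\<exists>a. 0 < a \<and> a < a0 \<and> \<rho>' a / 2 + \<rho> a / (2 * a) > - \<delta>"
proof (rule ccontr)
  assume "\<not> ?thesis"
  hence H: "\<And>a. 0 < a \<Longrightarrow> a < a0 \<Longrightarrow> \<rho>' a / 2 + \<rho> a / (2 * a) \<le> - \<delta>" by force
  define s where "s = a0 / 2"
  have s: "0 < s" "s < a0" using a0 by (auto simp: s_def)
  define q where "q r = r * \<rho> r + \<delta> * r\<^sup>2" for r
  have qdec: "q s \<le> q r" if r: "0 < r" "r \<le> s" for r
  proof (rule DERIV_nonpos_imp_nonincreasing[OF r(2)])
    fix x assume x: "r \<le> x" "x \<le> s"
    hence x0: "x > 0" "x < a0" using r s by auto
    have "(q has_real_derivative (1 * \<rho> x + x * \<rho>' x + \<delta> * (2 * x))) (at x)"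
      using der[OF x0(1)] unfolding q_def by (auto intro!: derivative_eq_intros)
    moreover have "1 * \<rho> x + x * \<rho>' x + \<delta> * (2 * x) \<le> 0"
    proof -
      have "\<rho>' x / 2 + \<rho> x / (2 * x) \<le> - \<delta>" using H x0 by auto
      hence "2 * x * (\<rho>' x / 2 + \<rho> x / (2 * x)) \<le> 2 * x * (- \<delta>)"
        using x0 by (intro mult_left_mono) auto
      moreover have "2 * x * (\<rho>' x / 2 + \<rho> x / (2 * x)) = x * \<rho>' x + \<rho> x"
        using x0 by (simp add: field_simps)
      ultimately show ?thesis by (simp add: algebra_simps)
    qed
    ultimately show "\<exists>y. (q has_real_derivative y) (at x) \<and> y \<le> 0" by blast
  qed
  show False
  proof (rule NI0[OF i nn, of "3/4 * \<delta> * s\<^sup>2" "s / 2"])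
    show "0 < 3/4 * \<delta> * s\<^sup>2" using \<delta> s by simp
    show "0 < s / 2" using s by simp
    fix r assume r: "0 < r" "r \<le> s / 2"
    have "q s \<le> q r" using qdec[of r] r s by auto
    moreover have "q s \<ge> \<delta> * s\<^sup>2" using nn[of s] s \<delta> by (simp add: q_def)
    ultimately have "r * \<rho> r \<ge> \<delta> * s\<^sup>2 - \<delta> * r\<^sup>2" by (simp add: q_def)
    moreover have "\<delta> * r\<^sup>2 \<le> \<delta> * (s/2)\<^sup>2" using r \<delta> by (intro mult_left_mono power_mono) auto
    ultimately have "r * \<rho> r \<ge> 3/4 * \<delta> * s\<^sup>2" by (simp add: power_divide)
    thus "3/4 * \<delta> * s\<^sup>2 / r \<le> \<rho> r" using r by (simp add: divide_le_eq algebra_simps)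
  qed
qed

lemma Einf:
  fixes \<rho> \<rho>' :: "real \<Rightarrow> real"
  assumes i: "set_integrable lborel {0<..} \<rho>" and nn: "\<And>r. r > 0 \<Longrightarrow> \<rho> r \<ge> 0"
    and der: "\<And>r. r > 0 \<Longrightarrow> (\<rho> has_real_derivative \<rho>' r) (at r)"
    and \<delta>: "\<delta> > 0"
  shows "\<exists>b. b > b0 \<and> \<rho>' b / 2 + \<rho> b / (2 * b) < \<delta>"
proof (rule ccontr)
  assume "\<not> ?thesis"
  hence H: "\<And>b. b > b0 \<Longrightarrow> \<rho>' b / 2 + \<rho> b / (2 * b) \<ge> \<delta>" by force
  define R where "R = max b0 0 + 1"
  have R: "R > 0" "R > b0" by (auto simp: R_def)
  define q where "q r = r * \<rho> r - \<delta> * r\<^sup>2" for r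
  have qinc: "q R \<le> q r" if r: "R \<le> r" for r
  proof (rule DERIV_nonneg_imp_nondecreasing[OF r])
    fix x assume x: "R \<le> x" "x \<le> r"
    hence x0: "x > 0" "x > b0" using R by auto
    have "(q has_real_derivative (1 * \<rho> x + x * \<rho>' x - \<delta> * (2 * x))) (at x)"
      using der[OF x0(1)] unfolding q_def by (auto intro!: derivative_eq_intros)
    moreover have "1 * \<rho> x + x * \<rho>' x - \<delta> * (2 * x) \<ge> 0"
    proof -
      have "\<rho>' x / 2 + \<rho> x / (2 * x) \<ge> \<delta>" using H x0 by auto
      hence "2 * x * (\<rho>' x / 2 + \<rho> x / (2 * x)) \<ge> 2 * x * \<delta>"
        using x0 by (intro mult_left_mono) auto
      moreover have "2 * x * (\<rho>' x / 2 + \<rho> x / (2 * x)) = x * \<rho>' x + \<rho> x"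
        using x0 by (simp add: field_simps)
      ultimately show ?thesis by (simp add: algebra_simps)
    qed
    ultimately show "\<exists>y. (q has_real_derivative y) (at x) \<and> y \<ge> 0" by blast
  qed
  show False
  proof (rule NIinf[OF i nn, of "3/2 * \<delta> * R" "2 * R"])
    show "0 < 3/2 * \<delta> * R" using \<delta> R by simp
    show "0 < 2 * R" using R by simp
    fix r assume r: "2 * R \<le> r"
    have "q R \<le> q r" using qinc[of r] r R by auto
    moreover have "q R \<ge> - \<delta> * R\<^sup>2" using nn[of R] R \<delta> by (simp add: q_def)
    ultimately have A: "r * \<rho> r \<ge> \<delta> * r\<^sup>2 - \<delta> * R\<^sup>2" by (simp add: q_def)
    have "\<delta> * R\<^sup>2 \<le> \<delta> * (r/2)\<^sup>2" using r R \<delta> by (intro mult_left_mono power_mono) auto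
    with A have "r * \<rho> r \<ge> 3/4 * \<delta> * r\<^sup>2" by (simp add: power_divide)
    hence "\<rho> r \<ge> 3/4 * \<delta> * r" using r R by (simp add: power2_eq_square mult.commute mult.left_commute)
    moreover have "3/4 * \<delta> * r \<ge> 3/4 * \<delta> * (2 * R)" using r \<delta> by simp
    ultimately show "3/2 * \<delta> * R \<le> \<rho> r" by linarith
  qed
qed

lemma E2inf:
  fixes \<rho> \<rho>' :: "real \<Rightarrow> real"
  assumes i: "set_integrable lborel {0<..} \<rho>" and nn: "\<And>r. r > 0 \<Longrightarrow> \<rho> r \<ge> 0"
    and i2: "set_integrable lborel {0<..} (\<lambda>r. r * \<rho> r)"
    and der: "\<And>r. r > 0 \<Longrightarrow> (\<rho> has_real_derivative \<rho>' r) (at r)"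
    and dc: "continuous_on {0<..} \<rho>'"
    and \<delta>: "\<delta> > 0"
  shows "\<exists>b. b > b0 \<and> \<rho>' b / 2 + (- 3 / (4 * b) + b / 8) * \<rho> b < \<delta>"
proof (rule ccontr)
  assume "\<not> ?thesis"
  hence H: "\<And>b. b > b0 \<Longrightarrow> \<rho>' b / 2 + (- 3 / (4 * b) + b / 8) * \<rho> b \<ge> \<delta>" by force
  define R where "R = max b0 0 + 1"
  have R: "R > 0" "R > b0" by (auto simp: R_def)
  define K where "K = (LINT r:{0<..}|lborel. r * \<rho> r)"
  have rc: "continuous_on {0<..} \<rho>"
    by (metis continuous_at_imp_continuous_on greaterThan_iff DERIV_isCont der)
  have lower: "\<rho> X \<ge> 2 * \<delta> * (X - R) - K / 4" if X: "R \<le> X" for X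
  proof -
    have c1: "continuous_on {R..X} \<rho>'" by (rule continuous_on_subset[OF dc]) (use R in auto)
    have c2: "continuous_on {R..X} \<rho>" by (rule continuous_on_subset[OF rc]) (use R in auto)
    have "(LBINT r=R..X. \<rho>' r) = \<rho> X - \<rho> R"
    proof (rule interval_integral_FTC_finite)
      show "continuous_on {min R X..max R X} \<rho>'" using c1 X by simp
      fix x assume "min R X \<le> x" "x \<le> max R X"
      hence "x > 0" using R X by auto
      thus "(\<rho> has_vector_derivative \<rho>' x) (at x within {min R X..max R X})"
        using der has_real_derivative_iff_has_vector_derivative has_vector_derivative_at_within by blast
    qed
    hence E: "(LINT r:{R..X}|lborel. \<rho>' r) = \<rho> X - \<rho> R" using interval_integral_Icc[OF X, of \<rho>'] by simp
    have "(LINT r:{R..X}|lborel. 2 * \<delta> - r * \<rho> r / 4) \<le> (LINT r:{R..X}|lborel. \<rho>' r)"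
    proof (rule set_integral_mono)
      show "set_integrable lborel {R..X} (\<lambda>r. 2 * \<delta> - r * \<rho> r / 4)"
        by (rule borel_integrable_atLeastAtMost') (use c2 in \<open>auto intro!: continuous_intros\<close>)
      show "set_integrable lborel {R..X} \<rho>'" by (rule borel_integrable_atLeastAtMost'[OF c1])
      fix r assume r: "r \<in> {R..X}"
      hence r0: "r > 0" "r > b0" using R by auto
      have "\<rho>' r / 2 + (- 3 / (4 * r) + r / 8) * \<rho> r \<ge> \<delta>" using H r0 by auto
      moreover have "3 / (4 * r) * \<rho> r \<ge> 0" using nn[OF r0(1)] r0 by simp
      ultimately have "\<rho>' r / 2 \<ge> \<delta> - r / 8 * \<rho> r" by (simp add: algebra_simps)
      thus "2 * \<delta> - r * \<rho> r / 4 \<le> \<rho>' r" by simp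
    qed
    also have "(LINT r:{R..X}|lborel. 2 * \<delta> - r * \<rho> r / 4)
        = (LINT r:{R..X}|lborel. 2 * \<delta>) - (LINT r:{R..X}|lborel. r * \<rho> r) / 4"
    proof -
      have a: "set_integrable lborel {R..X} (\<lambda>r. 2 * \<delta>)"
        by (rule borel_integrable_atLeastAtMost') (intro continuous_intros)
      have b: "set_integrable lborel {R..X} (\<lambda>r. r * \<rho> r / 4)"
        by (rule borel_integrable_atLeastAtMost') (use c2 in \<open>auto intro!: continuous_intros\<close>)
      show ?thesis using set_integral_diff(2)[OF a b] by simp
    qed
    also have "(LINT r:{R..X}|lborel. 2 * \<delta>) = 2 * \<delta> * (X - R)"
    proof -
      have e1: "(LBINT r=R..X. 2 * \<delta>) = 2 * \<delta> * (X - R)" by (rule interval_integral_const(2))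
      show ?thesis using interval_integral_Icc[OF X, of "\<lambda>r. 2 * \<delta>"] e1 by metis
    qed
    finally have "2 * \<delta> * (X - R) - (LINT r:{R..X}|lborel. r * \<rho> r) / 4 \<le> \<rho> X - \<rho> R"
      using E by simp
    moreover have "(LINT r:{R..X}|lborel. r * \<rho> r) \<le> K"
      unfolding K_def by (rule partial_le_total[OF i2 _ R(1)]) (use nn in simp)
    moreover have "\<rho> R \<ge> 0" using nn R by simp
    ultimately show ?thesis by linarith
  qed
  have "0 \<le> indicator {0<..} x *\<^sub>R (x * \<rho> x)" for x
    using nn[of x] by (cases "x > 0") (auto simp: indicator_def)
  hence K0: "K \<ge> 0" unfolding K_def set_lebesgue_integral_def
    by (intro integral_nonneg_AE AE_I2)
  show False
  proof (rule NIinf[OF i nn \<delta>, of "R + (K / 4 + \<delta>) / (2 * \<delta>)"])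
    show "0 < R + (K / 4 + \<delta>) / (2 * \<delta>)" using R K0 \<delta> by (simp add: add_pos_nonneg)
    fix r assume r: "R + (K / 4 + \<delta>) / (2 * \<delta>) \<le> r"
    hence "R \<le> r" using K0 \<delta> by (smt (verit) divide_nonneg_pos)
    hence "\<rho> r \<ge> 2 * \<delta> * (r - R) - K / 4" by (rule lower)
    moreover have "2 * \<delta> * (r - R) \<ge> 2 * \<delta> * ((K / 4 + \<delta>) / (2 * \<delta>))"
      using r \<delta> by (intro mult_left_mono) auto
    moreover have "2 * \<delta> * ((K / 4 + \<delta>) / (2 * \<delta>)) = K / 4 + \<delta>" using \<delta> by simp
    ultimately show "\<delta> \<le> \<rho> r" by linarith
  qed
qed

lemma L2prod:
  fixes f g :: "real \<Rightarrow> complex"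
  assumes fm: "set_borel_measurable lborel A f" and gm: "set_borel_measurable lborel A g"
    and fi: "set_integrable lborel A (\<lambda>x. (cmod (f x))\<^sup>2)" and gi: "set_integrable lborel A (\<lambda>x. (cmod (g x))\<^sup>2)"
  shows "set_integrable lborel A (\<lambda>x. f x * cnj (g x))"
proof -
  have hi: "set_integrable lborel A (\<lambda>x. ((cmod (f x))\<^sup>2 + (cmod (g x))\<^sup>2) / 2)"
    using set_integral_add(1)[OF fi gi] by (rule set_integrable_divide)
  have meas: "set_borel_measurable lborel A (\<lambda>x. f x * cnj (g x))"
  proof -
    have "(\<lambda>x. indicator A x *\<^sub>R (f x * cnj (g x))) = (\<lambda>x. (indicator A x *\<^sub>R f x) * cnj (indicator A x *\<^sub>R g x))"
      by (auto simp: indicator_def fun_eq_iff)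
    moreover have "(\<lambda>x. (indicator A x *\<^sub>R f x) * cnj (indicator A x *\<^sub>R g x)) \<in> borel_measurable lborel"
    proof -
      have cm: "cnj \<in> borel_measurable borel"
        by (intro borel_measurable_continuous_onI continuous_on_cnj continuous_on_id)
      have "(\<lambda>x. cnj (indicator A x *\<^sub>R g x)) \<in> borel_measurable lborel"
        using measurable_compose[OF gm[unfolded set_borel_measurable_def] cm] by (simp add: o_def)
      thus ?thesis using fm unfolding set_borel_measurable_def by (intro borel_measurable_times)
    qed
    ultimately show ?thesis unfolding set_borel_measurable_def by simp
  qed
  have AE: "AE x in lborel. x \<in> A \<longrightarrow> norm (f x * cnj (g x)) \<le> norm (((cmod (f x))\<^sup>2 + (cmod (g x))\<^sup>2) / 2)"
  proof (rule AE_I2, rule impI)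
    fix x
    have "norm (f x * cnj (g x)) = cmod (f x) * cmod (g x)" by (simp add: norm_mult)
    also have "\<dots> \<le> ((cmod (f x))\<^sup>2 + (cmod (g x))\<^sup>2) / 2"
    proof -
      have "0 \<le> (cmod (f x) - cmod (g x))\<^sup>2" by simp
      moreover have "(cmod (f x) - cmod (g x))\<^sup>2 = (cmod (f x))\<^sup>2 - 2 * ((cmod (f x)) * (cmod (g x))) + (cmod (g x))\<^sup>2"
        by (simp add: power2_diff)
      ultimately have "2 * (cmod (f x) * cmod (g x)) \<le> (cmod (f x))\<^sup>2 + (cmod (g x))\<^sup>2" by linarith
      thus ?thesis by simp
    qed
    also have "\<dots> = norm (((cmod (f x))\<^sup>2 + (cmod (g x))\<^sup>2) / 2)" by simp
    finally show "norm (f x * cnj (g x)) \<le> norm (((cmod (f x))\<^sup>2 + (cmod (g x))\<^sup>2) / 2)" .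
  qed
  show ?thesis by (rule set_integrable_bound[OF hi meas AE])
qed

lemma mono_interval:
  fixes f :: "real \<Rightarrow> real"
  assumes i: "set_integrable lborel {0<..} f" and nn: "\<And>r. r > 0 \<Longrightarrow> f r \<ge> 0"
    and a: "0 < a" "a \<le> a'" "b' \<le> b"
  shows "(LINT r:{a'..b'}|lborel. f r) \<le> (LINT r:{a..b}|lborel. f r)"
  unfolding set_lebesgue_integral_def
proof (rule integral_mono)
  have s1: "{a'..b'} \<subseteq> {0<..}" "{a..b} \<subseteq> {0<..}" using a by auto
  show "integrable lborel (\<lambda>x. indicat_real {a'..b'} x *\<^sub>R f x)"
    using set_integrable_subset[OF i _ s1(1)] unfolding set_integrable_def by auto
  show "integrable lborel (\<lambda>x. indicat_real {a..b} x *\<^sub>R f x)"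
    using set_integrable_subset[OF i _ s1(2)] unfolding set_integrable_def by auto
  fix x show "indicat_real {a'..b'} x *\<^sub>R f x \<le> indicat_real {a..b} x *\<^sub>R f x"
    using a nn[of x] by (auto simp: indicator_def)
qed

lemma disjoint_le:
  fixes f :: "real \<Rightarrow> real"
  assumes i: "set_integrable lborel {0<..} f" and nn: "\<And>r. r > 0 \<Longrightarrow> f r \<ge> 0"
    and a: "0 < a" "a \<le> b" "b < a'"
  shows "(LINT r:{a..b}|lborel. f r) + (LINT r:{a'..b'}|lborel. f r) \<le> (LINT r:{0<..}|lborel. f r)"
proof -
  have s1: "{a'..b'} \<subseteq> {0<..}" "{a..b} \<subseteq> {0<..}" using a by auto
  have i1: "integrable lborel (\<lambda>x. indicat_real {a..b} x *\<^sub>R f x)"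
    using set_integrable_subset[OF i _ s1(2)] unfolding set_integrable_def by auto
  have i2: "integrable lborel (\<lambda>x. indicat_real {a'..b'} x *\<^sub>R f x)"
    using set_integrable_subset[OF i _ s1(1)] unfolding set_integrable_def by auto
  have "(LINT r:{a..b}|lborel. f r) + (LINT r:{a'..b'}|lborel. f r)
      = integral\<^sup>L lborel (\<lambda>x. indicat_real {a..b} x *\<^sub>R f x + indicat_real {a'..b'} x *\<^sub>R f x)"
    unfolding set_lebesgue_integral_def using Bochner_Integration.integral_add[OF i1 i2] by simp
  also have "\<dots> \<le> integral\<^sup>L lborel (\<lambda>x. indicat_real {0<..} x *\<^sub>R f x)"
  proof (rule integral_mono)
    show "integrable lborel (\<lambda>x. indicat_real {a..b} x *\<^sub>R f x + indicat_real {a'..b'} x *\<^sub>R f x)"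
      using i1 i2 by simp
    show "integrable lborel (\<lambda>x. indicat_real {0<..} x *\<^sub>R f x)" using i unfolding set_integrable_def .
    fix x show "indicat_real {a..b} x *\<^sub>R f x + indicat_real {a'..b'} x *\<^sub>R f x \<le> indicat_real {0<..} x *\<^sub>R f x"
      using a nn[of x] by (auto simp: indicator_def)
  qed
  finally show ?thesis unfolding set_lebesgue_integral_def .
qed

lemma approx_total:
  fixes f :: "real \<Rightarrow> real"
  assumes i: "set_integrable lborel {0<..} f" and e: "\<epsilon> > 0"
  shows "\<exists>n::nat. (LINT r:{1/real (Suc n)..real (Suc n)}|lborel. f r) \<ge> (LINT r:{0<..}|lborel. f r) - \<epsilon>"
proof -
  define F where "F n x = indicator {1/(Suc n)..Suc n} x *\<^sub>R f x" for n :: nat and x :: real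
  have im: "(\<lambda>x. indicator {0<..} x *\<^sub>R f x) \<in> borel_measurable lborel" using i unfolding set_integrable_def by auto
  have sub: "{1/real (Suc n)..real (Suc n)} \<subseteq> {0<..}" for n
  proof -
    have "0 < 1/real (Suc n)" by simp
    thus ?thesis by (meson atLeastAtMost_iff greaterThan_iff less_le_trans subsetI)
  qed
  have Fi: "integrable lborel (F n)" for n
    using set_integrable_subset[OF i _ sub[of n]] unfolding F_def set_integrable_def by auto
  have lim: "(\<lambda>n. F n x) \<longlonglongrightarrow> indicator {0<..} x *\<^sub>R f x" for x
  proof (cases "x > 0")
    case True
    obtain N :: nat where N: "N > max x (1/x)" using reals_Archimedean2 by blast
    have "\<forall>n\<ge>N. F n x = indicator {0<..} x *\<^sub>R f x"
    proof (intro allI impI)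
      fix n assume "n \<ge> N"
      hence "real (Suc n) > max x (1/x)" using N by linarith
      hence "x \<le> Suc n" "1 / real (Suc n) \<le> x" using True
        by (auto simp: field_simps)
      thus "F n x = indicator {0<..} x *\<^sub>R f x" using True by (simp add: F_def)
    qed
    thus ?thesis by (intro tendsto_eventually) (auto simp: eventually_sequentially)
  next
    case False
    have "F n x = 0" for n
    proof -
      have "0 < 1/real (Suc n)" by simp
      hence "x \<notin> {1/real (Suc n)..real (Suc n)}" using False by (meson atLeastAtMost_iff less_le_trans)
      thus ?thesis by (simp add: F_def)
    qed
    thus ?thesis using False by simp
  qed
  have "(\<lambda>n. integral\<^sup>L lborel (F n)) \<longlonglongrightarrow> integral\<^sup>L lborel (\<lambda>x. indicator {0<..} x *\<^sub>R f x)"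
  proof (rule integral_dominated_convergence[where w="\<lambda>x. indicator {0<..} x *\<^sub>R norm (f x)"])
    show "integrable lborel (\<lambda>x. indicat_real {0<..} x *\<^sub>R norm (f x))"
      using integrable_norm[OF i[unfolded set_integrable_def]] by (simp add: abs_mult)
    show "(\<lambda>x. indicat_real {0<..} x *\<^sub>R f x) \<in> borel_measurable lborel" by (rule im)
    show "F n \<in> borel_measurable lborel" for n using Fi by auto
    show "AE x in lborel. (\<lambda>n. F n x) \<longlonglongrightarrow> indicat_real {0<..} x *\<^sub>R f x" using lim by simp
    show "AE x in lborel. norm (F n x) \<le> indicat_real {0<..} x *\<^sub>R norm (f x)" for n
      using sub[of n] by (intro AE_I2) (auto simp: F_def indicator_def subset_iff)
  qed
  hence "\<forall>\<^sub>F n in sequentially. integral\<^sup>L lborel (F n) > integral\<^sup>L lborel (\<lambda>x. indicator {0<..} x *\<^sub>R f x) - \<epsilon>"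
    using e by (intro order_tendstoD) auto
  then obtain n where "integral\<^sup>L lborel (F n) > integral\<^sup>L lborel (\<lambda>x. indicator {0<..} x *\<^sub>R f x) - \<epsilon>"
    by (auto simp: eventually_sequentially)
  thus ?thesis unfolding set_lebesgue_integral_def F_def by (intro exI[of _ n]) simp
qed

lemma diff_bound:
  fixes f :: "real \<Rightarrow> real"
  assumes i: "set_integrable lborel {0<..} f" and a: "0 < a"
  shows "\<bar>(LINT r:{0<..}|lborel. f r) - (LINT r:{a..b}|lborel. f r)\<bar>
     \<le> (LINT r:{0<..}|lborel. \<bar>f r\<bar>) - (LINT r:{a..b}|lborel. \<bar>f r\<bar>)"
proof -
  have sub: "{a..b} \<subseteq> {0<..}" using a by auto
  have i1: "integrable lborel (\<lambda>x. indicat_real {0<..} x *\<^sub>R f x)" using i unfolding set_integrable_def .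
  have i2: "integrable lborel (\<lambda>x. indicat_real {a..b} x *\<^sub>R f x)"
    using set_integrable_subset[OF i _ sub] unfolding set_integrable_def by auto
  have ia: "set_integrable lborel {0<..} (\<lambda>x. \<bar>f x\<bar>)" using set_integrable_abs[OF i] .
  have i3: "integrable lborel (\<lambda>x. indicat_real {0<..} x *\<^sub>R \<bar>f x\<bar>)" using ia unfolding set_integrable_def .
  have i4: "integrable lborel (\<lambda>x. indicat_real {a..b} x *\<^sub>R \<bar>f x\<bar>)"
    using set_integrable_subset[OF ia _ sub] unfolding set_integrable_def by auto
  have "(LINT r:{0<..}|lborel. f r) - (LINT r:{a..b}|lborel. f r)
     = integral\<^sup>L lborel (\<lambda>x. indicat_real {0<..} x *\<^sub>R f x - indicat_real {a..b} x *\<^sub>R f x)"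
    unfolding set_lebesgue_integral_def using Bochner_Integration.integral_diff[OF i1 i2] by simp
  also have "\<bar>\<dots>\<bar> \<le> integral\<^sup>L lborel (\<lambda>x. \<bar>indicat_real {0<..} x *\<^sub>R f x - indicat_real {a..b} x *\<^sub>R f x\<bar>)"
    by (rule integral_abs_bound)
  also have "\<dots> = integral\<^sup>L lborel (\<lambda>x. indicat_real {0<..} x *\<^sub>R \<bar>f x\<bar> - indicat_real {a..b} x *\<^sub>R \<bar>f x\<bar>)"
    by (intro Bochner_Integration.integral_cong) (use a in \<open>auto simp: indicator_def\<close>)
  also have "\<dots> = (LINT r:{0<..}|lborel. \<bar>f r\<bar>) - (LINT r:{a..b}|lborel. \<bar>f r\<bar>)"
    unfolding set_lebesgue_integral_def using Bochner_Integration.integral_diff[OF i3 i4] by simp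
  finally show ?thesis .
qed

lemma tail_bound:
  fixes f :: "real \<Rightarrow> real"
  assumes i: "set_integrable lborel {0<..} f" and e: "\<epsilon> > 0"
  shows "\<exists>a0>0. \<exists>b0. \<forall>a b. 0 < a \<longrightarrow> a \<le> a0 \<longrightarrow> b0 \<le> b \<longrightarrow>
     (LINT r:{a..b}|lborel. f r) \<le> (LINT r:{0<..}|lborel. f r) + \<epsilon>"
proof -
  have ia: "set_integrable lborel {0<..} (\<lambda>x. \<bar>f x\<bar>)" using set_integrable_abs[OF i] .
  obtain n :: nat where n: "(LINT r:{1/real (Suc n)..real (Suc n)}|lborel. \<bar>f r\<bar>) \<ge> (LINT r:{0<..}|lborel. \<bar>f r\<bar>) - \<epsilon>"
    using approx_total[OF ia e] by blast
  have p: "0 < 1/real (Suc n)" by simp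
  have "\<forall>a b. 0 < a \<longrightarrow> a \<le> 1/real (Suc n) \<longrightarrow> real (Suc n) \<le> b \<longrightarrow>
     (LINT r:{a..b}|lborel. f r) \<le> (LINT r:{0<..}|lborel. f r) + \<epsilon>"
  proof (intro allI impI)
    fix a b :: real assume ab: "0 < a" "a \<le> 1/real (Suc n)" "real (Suc n) \<le> b"
    have "(LINT r:{1/real (Suc n)..real (Suc n)}|lborel. \<bar>f r\<bar>) \<le> (LINT r:{a..b}|lborel. \<bar>f r\<bar>)"
      by (rule mono_interval[OF ia]) (use ab in auto)
    moreover have "\<bar>(LINT r:{0<..}|lborel. f r) - (LINT r:{a..b}|lborel. f r)\<bar>
     \<le> (LINT r:{0<..}|lborel. \<bar>f r\<bar>) - (LINT r:{a..b}|lborel. \<bar>f r\<bar>)" by (rule diff_bound[OF i ab(1)])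
    ultimately show "(LINT r:{a..b}|lborel. f r) \<le> (LINT r:{0<..}|lborel. f r) + \<epsilon>" using n by linarith
  qed
  thus ?thesis using p by blast
qed

lemma small_near0:
  fixes f :: "real \<Rightarrow> real"
  assumes i: "set_integrable lborel {0<..} f" and nn: "\<And>r. r > 0 \<Longrightarrow> f r \<ge> 0" and e: "\<epsilon> > 0"
  shows "\<exists>b1>0. \<forall>a b. 0 < a \<longrightarrow> b < b1 \<longrightarrow> (LINT r:{a..b}|lborel. f r) \<le> \<epsilon>"
proof -
  obtain n :: nat where n: "(LINT r:{1/real (Suc n)..real (Suc n)}|lborel. f r) \<ge> (LINT r:{0<..}|lborel. f r) - \<epsilon>"
    using approx_total[OF i e] by blast
  have p: "0 < 1/real (Suc n)" by simp
  have "\<forall>a b. 0 < a \<longrightarrow> b < 1/real (Suc n) \<longrightarrow> (LINT r:{a..b}|lborel. f r) \<le> \<epsilon>"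
  proof (intro allI impI)
    fix a b :: real assume ab: "0 < a" "b < 1/real (Suc n)"
    show "(LINT r:{a..b}|lborel. f r) \<le> \<epsilon>"
    proof (cases "a \<le> b")
      case True
      from disjoint_le[OF i nn ab(1) True ab(2), of "real (Suc n)"] n
      show ?thesis by linarith
    next
      case False
      thus ?thesis using e by (simp add: set_lebesgue_integral_def)
    qed
  qed
  thus ?thesis using p by blast
qed

locale wsetup1 = wsetup +
  assumes k1: "\<bar>k\<bar> \<ge> 1"
begin

lemma kk: "(of_int k)\<^sup>2 \<ge> (1::real)"
proof -
  have "1 \<le> \<bar>real_of_int k\<bar>" using k1 by linarith
  hence "1 * 1 \<le> \<bar>real_of_int k\<bar> * \<bar>real_of_int k\<bar>" by (intro mult_mono) auto
  thus ?thesis by (simp add: power2_eq_square)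
qed

lemma wL2: "set_borel_measurable lborel {0<..} w" "set_integrable lborel {0<..} (\<lambda>r. (cmod (w r))\<^sup>2)"
  using D unfolding Dk_def L2pos_def by auto

lemma LL2: "set_borel_measurable lborel {0<..} (Lop k \<beta> w w2)" "set_integrable lborel {0<..} (\<lambda>r. (cmod (Lop k \<beta> w w2 r))\<^sup>2)"
  using D unfolding Dk_def L2pos_def by auto

lemma rho_int: "set_integrable lborel {0<..} rho"
  using wL2(2) unfolding rho_def .

lemma Fop_eq: "Fop k \<beta> lam w w2 r = Lop k \<beta> w w2 r - \<i> * of_real \<beta> * of_real lam * w r"
proof (cases "r = 0")
  case True thus ?thesis by (simp add: Fop_def Lop_def algebra_simps)
next
  case False
  thus ?thesis by (simp add: Fop_def Lop_def field_simps)
qed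

lemma Fw_int: "set_integrable lborel {0<..} (\<lambda>r. Fop k \<beta> lam w w2 r * cnj (w r))"
proof -
  have i1: "set_integrable lborel {0<..} (\<lambda>r. Lop k \<beta> w w2 r * cnj (w r))"
    by (rule L2prod[OF LL2(1) wL2(1) LL2(2) wL2(2)])
  have "integrable lborel (\<lambda>x. indicator {0<..} x *\<^sub>R rho x)" using rho_int unfolding set_integrable_def .
  hence "complex_integrable lborel (\<lambda>x. complex_of_real (indicator {0<..} x *\<^sub>R rho x))"
    by (simp only: complex_of_real_integrable_eq)
  hence "set_integrable lborel {0<..} (\<lambda>r. complex_of_real (rho r))"
    unfolding set_integrable_def by (simp add: scaleR_conv_of_real)
  hence i2: "set_integrable lborel {0<..} (\<lambda>r. (\<i> * of_real \<beta> * of_real lam) * complex_of_real (rho r))"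
    by (rule set_integrable_mult_right)
  have "set_integrable lborel {0<..} (\<lambda>r. Lop k \<beta> w w2 r * cnj (w r) - (\<i> * of_real \<beta> * of_real lam) * complex_of_real (rho r))"
    by (rule set_integral_diff(1)[OF i1 i2])
  moreover have "Lop k \<beta> w w2 r * cnj (w r) - (\<i> * of_real \<beta> * of_real lam) * complex_of_real (rho r)
      = Fop k \<beta> lam w w2 r * cnj (w r)" for r
    unfolding Fop_eq rho_def complex_norm_square by (simp add: algebra_simps)
  ultimately show ?thesis by simp
qed

lemma Re_Fw: "Re (Fop k \<beta> lam w w2 r * cnj (w r)) = hh r"
proof -
  have "Fop k \<beta> lam w w2 r * cnj (w r) = - (w2 r * cnj (w r)) + of_real (pot k r) * (w r * cnj (w r))
      + \<i> * (of_real \<beta> * of_real (1 / r\<^sup>2 - lam) * (w r * cnj (w r)))"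
    unfolding Fop_def by (simp add: algebra_simps)
  also have "\<dots> = - (w2 r * cnj (w r)) + of_real (pot k r * rho r) + \<i> * of_real (\<beta> * (1 / r\<^sup>2 - lam) * rho r)"
    unfolding rho_def complex_norm_square[symmetric] by simp
  finally show ?thesis unfolding hh_def by simp
qed

lemma hh_glob: "set_integrable lborel {0<..} hh"
  using set_integral_Re(1)[OF Fw_int[of 0]] unfolding Re_Fw .

lemma ip_eq: "Re (ip (Fop k \<beta> lam w w2) w) = (LINT r:{0<..}|lborel. hh r)"
  unfolding ip_def using set_integral_Re(2)[OF Fw_int[of lam]] unfolding Re_Fw by simp

end

lemma cont_meas:
  fixes f :: "real \<Rightarrow> real"
  assumes "continuous_on {0<..} f"
  shows "set_borel_measurable lborel {0<..} f"
  unfolding set_borel_measurable_def using borel_measurable_continuous_on_indicator[OF _ assms] by simp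

lemma int_by_bound:
  fixes f F :: "real \<Rightarrow> real"
  assumes i: "set_integrable lborel {0<..} F" and c: "continuous_on {0<..} f" and b: "\<And>r. r > 0 \<Longrightarrow> \<bar>f r\<bar> \<le> F r"
  shows "set_integrable lborel {0<..} f"
proof (rule set_integrable_bound[OF i cont_meas[OF c]])
  show "AE x in lborel. x \<in> {0<..} \<longrightarrow> norm (f x) \<le> norm (F x)"
  proof (rule AE_I2, rule impI)
    fix x :: real assume "x \<in> {0<..}"
    hence "\<bar>f x\<bar> \<le> F x" using b by auto
    thus "norm (f x) \<le> norm (F x)" by (auto intro: order_trans[OF _ abs_ge_self])
  qed
qed

lemma mono_interval_c:
  fixes f :: "real \<Rightarrow> real"
  assumes c: "continuous_on {0<..} f" and nn: "\<And>r. r > 0 \<Longrightarrow> f r \<ge> 0"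
    and a: "0 < a" "a \<le> a'" "b' \<le> b"
  shows "(LINT r:{a'..b'}|lborel. f r) \<le> (LINT r:{a..b}|lborel. f r)"
  unfolding set_lebesgue_integral_def
proof (rule integral_mono)
  have c1: "continuous_on {a'..b'} f" "continuous_on {a..b} f" using a by (auto intro: continuous_on_subset[OF c])
  show "integrable lborel (\<lambda>x. indicat_real {a'..b'} x *\<^sub>R f x)"
    using borel_integrable_atLeastAtMost'[OF c1(1)] unfolding set_integrable_def .
  show "integrable lborel (\<lambda>x. indicat_real {a..b} x *\<^sub>R f x)"
    using borel_integrable_atLeastAtMost'[OF c1(2)] unfolding set_integrable_def .
  fix x show "indicat_real {a'..b'} x *\<^sub>R f x \<le> indicat_real {a..b} x *\<^sub>R f x"
    using a nn[of x] by (auto simp: indicator_def)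
qed

context wsetup1 begin

definition g0 :: "real \<Rightarrow> real" where "g0 r = 1 / (2 * r)"
definition g0' :: "real \<Rightarrow> real" where "g0' r = - 1 / (2 * r\<^sup>2)"
definition zz :: "real \<Rightarrow> real" where "zz r = (cmod (w1 r + w r / complex_of_real (2 * r)))\<^sup>2"
definition f1 :: "real \<Rightarrow> real" where "f1 r = zz r + r\<^sup>2 * rho r / 16"

lemma g0_der: "r > 0 \<Longrightarrow> (g0 has_real_derivative g0' r) (at r)"
  unfolding g0_def g0'_def by (auto intro!: derivative_eq_intros simp: power2_eq_square field_simps)

lemma g0'_cont: "continuous_on {0<..} g0'"
  unfolding g0'_def by (intro continuous_intros) auto

lemma g0_cont: "continuous_on {0<..} g0"
  unfolding g0_def by (intro continuous_intros) auto

lemma Bf_g0: "Bf g0 r = drho r / 2 + rho r / (2 * r)"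
  unfolding Bf_def g0_def drho_def by simp

lemma zz_eq: assumes r: "r > 0" shows "zz r = (cmod (w1 r))\<^sup>2 + drho r / (2 * r) + rho r / (4 * r\<^sup>2)"
proof -
  have "zz r = Re ((w1 r + w r / complex_of_real (2 * r)) * cnj (w1 r + w r / complex_of_real (2 * r)))"
    unfolding zz_def complex_norm_square[symmetric] by simp
  also have "\<dots> = (cmod (w1 r))\<^sup>2 + drho r / (2 * r) + rho r / (4 * r\<^sup>2)"
    unfolding drho_def rho_def cmod_power2 using r
    by (simp add: field_simps power2_eq_square)
  finally show ?thesis .
qed

lemma zz_nn: "zz r \<ge> 0" unfolding zz_def by simp

lemma zz_cont: "continuous_on {0<..} zz"
  unfolding zz_def by (intro continuous_intros w_cont w1_cont) auto

lemma f1_cont: "continuous_on {0<..} f1"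
  unfolding f1_def by (intro continuous_intros zz_cont rho_cont) auto

lemma f1_nn: "f1 r \<ge> 0" unfolding f1_def using zz_nn[of r] rho_nonneg[of r] by simp

lemma Jf_cont:
  assumes "continuous_on {0<..} g" "continuous_on {0<..} g'"
  shows "continuous_on {0<..} (Jf g g')"
  unfolding Jf_def by (intro continuous_intros assms w1_cont drho_cont pot_cont rho_cont)

lemma J0_bound: assumes r: "r > 0" shows "f1 r \<le> Jf g0 g0' r + rho r / 2"
proof -
  have "Jf g0 g0' r + rho r / 2 - f1 r = ((of_int k)\<^sup>2 - 1) * rho r / r\<^sup>2"
    unfolding Jf_def f1_def zz_eq[OF r] g0_def g0'_def pot_def using r
    by (simp add: field_simps power2_eq_square)
  moreover have "((of_int k)\<^sup>2 - 1) * rho r / r\<^sup>2 \<ge> 0"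
    using kk rho_nonneg[of r] by simp
  ultimately show ?thesis by linarith
qed

lemma hh_abs_int: "set_integrable lborel {0<..} (\<lambda>r. \<bar>hh r\<bar>)"
  using set_integrable_abs[OF hh_glob] .

lemma stage1: "set_integrable lborel {0<..} f1"
proof (rule bounded_partials(1)[OF f1_cont f1_nn])
  fix a' b' :: real assume ab': "0 < a'" "a' \<le> b'"
  define M where "M = (LINT r:{0<..}|lborel. \<bar>hh r\<bar>) + 1 + (LINT r:{0<..}|lborel. rho r / 2)"
  obtain a where a: "0 < a" "a < a'" "drho a / 2 + rho a / (2 * a) > - 1/2"
    using E0[OF rho_int rho_nonneg rho_der, of "1/2" a'] ab' by auto
  obtain b where b: "b > b'" "drho b / 2 + rho b / (2 * b) < 1/2"
    using Einf[OF rho_int rho_nonneg rho_der, of "1/2" b'] by auto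
  have ab: "0 < a" "a \<le> b" using a b ab' by auto
  have J0c: "continuous_on {0<..} (Jf g0 g0')" by (rule Jf_cont[OF g0_cont g0'_cont])
  have cs: "continuous_on {a..b} f" if "continuous_on {0<..} f" for f :: "real \<Rightarrow> real"
    using cont_sub[OF that ab(1)] .
  have "(LINT r:{a'..b'}|lborel. f1 r) \<le> (LINT r:{a..b}|lborel. f1 r)"
    by (rule mono_interval_c[OF f1_cont f1_nn]) (use a b in auto)
  also have "\<dots> \<le> (LINT r:{a..b}|lborel. Jf g0 g0' r + rho r / 2)"
  proof (rule set_integral_mono)
    show "set_integrable lborel {a..b} f1" by (rule borel_integrable_atLeastAtMost'[OF cs[OF f1_cont]])
    show "set_integrable lborel {a..b} (\<lambda>r. Jf g0 g0' r + rho r / 2)"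
      by (rule borel_integrable_atLeastAtMost') (use cs[OF J0c] cs[OF rho_cont] in \<open>auto intro!: continuous_intros\<close>)
    fix r assume "r \<in> {a..b}" thus "f1 r \<le> Jf g0 g0' r + rho r / 2" using J0_bound ab by auto
  qed
  also have "\<dots> = (LINT r:{a..b}|lborel. Jf g0 g0' r) + (LINT r:{a..b}|lborel. rho r / 2)"
  proof (rule set_integral_add(2))
    show "set_integrable lborel {a..b} (Jf g0 g0')" by (rule borel_integrable_atLeastAtMost'[OF cs[OF J0c]])
    show "set_integrable lborel {a..b} (\<lambda>r. rho r / 2)"
      by (rule borel_integrable_atLeastAtMost') (use cs[OF rho_cont] in \<open>auto intro!: continuous_intros\<close>)
  qed
  also have "(LINT r:{a..b}|lborel. Jf g0 g0' r) = (LINT r:{a..b}|lborel. hh r) - Bf g0 a + Bf g0 b"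
    using identity[OF g0_der g0'_cont ab] by simp
  also have "\<dots> \<le> (LINT r:{a..b}|lborel. \<bar>hh r\<bar>) + 1"
  proof -
    have "(LINT r:{a..b}|lborel. hh r) \<le> (LINT r:{a..b}|lborel. \<bar>hh r\<bar>)"
      by (rule set_integral_mono[OF hh_int[OF ab] set_integrable_abs[OF hh_int[OF ab]]]) simp
    thus ?thesis using a b unfolding Bf_g0 by linarith
  qed
  also have "(LINT r:{a..b}|lborel. \<bar>hh r\<bar>) \<le> (LINT r:{0<..}|lborel. \<bar>hh r\<bar>)"
    by (rule partial_le_total[OF hh_abs_int _ ab(1)]) simp
  also have "(LINT r:{a..b}|lborel. rho r / 2) \<le> (LINT r:{0<..}|lborel. rho r / 2)"
    by (rule partial_le_total[OF set_integrable_divide[OF rho_int] _ ab(1)]) (simp add: rho_nonneg)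
  finally show "(LINT r:{a'..b'}|lborel. f1 r) \<le> M" unfolding M_def by linarith
qed

lemma zz_int: "set_integrable lborel {0<..} zz"
  by (rule int_by_bound[OF stage1 zz_cont]) (simp add: f1_def zz_nn rho_nonneg)

lemma r2rho_int: "set_integrable lborel {0<..} (\<lambda>r. r\<^sup>2 * rho r)"
proof -
  have "set_integrable lborel {0<..} (\<lambda>r. 16 * f1 r)" using stage1 by (rule set_integrable_mult_right)
  thus ?thesis
    by (rule int_by_bound) (auto intro!: continuous_intros rho_cont simp: f1_def zz_nn rho_nonneg)
qed

lemma rrho_int: "set_integrable lborel {0<..} (\<lambda>r. r * rho r)"
proof -
  have "set_integrable lborel {0<..} (\<lambda>r. rho r + r\<^sup>2 * rho r)" using set_integral_add(1)[OF rho_int r2rho_int] .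
  thus ?thesis
  proof (rule int_by_bound)
    show "continuous_on {0<..} (\<lambda>r. r * rho r)" by (intro continuous_intros rho_cont)
    fix r :: real assume r: "r > 0"
    have "0 \<le> (r - 1)\<^sup>2" by simp
    moreover have "(r - 1)\<^sup>2 = r\<^sup>2 - 2 * r + 1" by (simp add: power2_diff)
    moreover have "0 \<le> r\<^sup>2" by simp
    ultimately have "r \<le> 1 + r\<^sup>2" by linarith
    hence "r * rho r \<le> (1 + r\<^sup>2) * rho r" using rho_nonneg by (intro mult_right_mono) auto
    thus "\<bar>r * rho r\<bar> \<le> rho r + r\<^sup>2 * rho r" using r rho_nonneg[of r] by (simp add: algebra_simps)
  qed
qed

end

context wsetup1 begin

definition v :: "real \<Rightarrow> complex" where "v r = complex_of_real (sqrt r) * w r"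
definition v' :: "real \<Rightarrow> complex" where "v' r = complex_of_real (sqrt r) * (w1 r + w r / complex_of_real (2 * r))"

lemma v_der: assumes r: "r > 0" shows "(v has_vector_derivative v' r) (at r)"
proof -
  have s: "((\<lambda>x. complex_of_real (sqrt x)) has_vector_derivative complex_of_real (inverse (sqrt r) / 2)) (at r)"
    by (rule has_vector_derivative_of_real[OF DERIV_real_sqrt[OF r]])
  have "(v has_vector_derivative (complex_of_real (sqrt r) * w1 r + complex_of_real (inverse (sqrt r) / 2) * w r)) (at r)"
    unfolding v_def by (rule has_vector_derivative_mult[OF s wder[OF r]])
  moreover have "complex_of_real (sqrt r) * w1 r + complex_of_real (inverse (sqrt r) / 2) * w r = v' r"
  proof -
    have sq: "sqrt r * sqrt r = r" using r by simp
    have "inverse (sqrt r) / 2 = sqrt r / (2 * r)"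
      using r sq by (simp add: field_simps)
    thus ?thesis unfolding v'_def by (simp add: algebra_simps)
  qed
  ultimately show ?thesis by simp
qed

lemma v'_cont: "continuous_on {0<..} v'"
  unfolding v'_def by (intro continuous_intros w_cont w1_cont) auto

lemma norm_v': assumes r: "r > 0" shows "cmod (v' r) = sqrt r * sqrt (zz r)"
  unfolding v'_def zz_def using r by (simp add: norm_mult)

lemma norm_v: assumes r: "r > 0" shows "(cmod (v r))\<^sup>2 = r * rho r"
  unfolding v_def rho_def using r by (simp add: norm_mult power_mult_distrib)

lemma amgm: assumes t: "t > 0" and r: "r > 0" shows "sqrt r * sqrt (zz r) \<le> zz r / (2 * t) + t * r / 2"
proof -
  have "0 \<le> (sqrt (zz r) - t * sqrt r)\<^sup>2" by simp
  also have "\<dots> = zz r - 2 * t * (sqrt r * sqrt (zz r)) + t\<^sup>2 * r"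
    using r zz_nn[of r] by (simp add: power2_diff power_mult_distrib algebra_simps)
  finally have "2 * t * (sqrt r * sqrt (zz r)) \<le> zz r + t\<^sup>2 * r" by simp
  hence "sqrt r * sqrt (zz r) \<le> (zz r + t\<^sup>2 * r) / (2 * t)" using t by (simp add: field_simps)
  also have "\<dots> = zz r / (2 * t) + t * r / 2" using t by (simp add: field_simps power2_eq_square)
  finally show ?thesis .
qed

lemma v_diff:
  assumes ab: "0 < a" "a \<le> b" and t: "t > 0"
  shows "cmod (v b - v a) \<le> (LINT r:{a..b}|lborel. zz r) / (2 * t) + t * b\<^sup>2 / 2"
proof -
  have c: "continuous_on {a..b} v'" by (rule cont_sub[OF v'_cont ab(1)])
  have "(LBINT r=a..b. v' r) = v b - v a"
  proof (rule interval_integral_FTC_finite)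
    show "continuous_on {min a b..max a b} v'" using c ab by simp
    fix x assume "min a b \<le> x" "x \<le> max a b"
    hence "x > 0" using ab by auto
    thus "(v has_vector_derivative v' x) (at x within {min a b..max a b})"
      using v_der has_vector_derivative_at_within by blast
  qed
  hence E: "v b - v a = (LINT r:{a..b}|lborel. v' r)" using interval_integral_Icc[OF ab(2), of v'] by simp
  have "cmod (LINT r:{a..b}|lborel. v' r) \<le> (LINT r:{a..b}|lborel. cmod (v' r))"
    unfolding set_lebesgue_integral_def
    using integral_norm_bound[of lborel "\<lambda>x. indicat_real {a..b} x *\<^sub>R v' x"] by (simp add: abs_mult)
  also have "\<dots> = (LINT r:{a..b}|lborel. sqrt r * sqrt (zz r))"
    by (rule set_lebesgue_integral_cong) (use ab norm_v' in auto)
  also have "\<dots> \<le> (LINT r:{a..b}|lborel. zz r / (2 * t) + t * r / 2)"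
  proof (rule set_integral_mono)
    show "set_integrable lborel {a..b} (\<lambda>r. sqrt r * sqrt (zz r))"
      by (rule borel_integrable_atLeastAtMost') (use cont_sub[OF zz_cont ab(1)] in \<open>intro continuous_intros\<close>)
    show "set_integrable lborel {a..b} (\<lambda>r. zz r / (2 * t) + t * r / 2)"
      by (rule borel_integrable_atLeastAtMost') (use cont_sub[OF zz_cont ab(1)] t in \<open>auto intro!: continuous_intros\<close>)
    fix r assume "r \<in> {a..b}" thus "sqrt r * sqrt (zz r) \<le> zz r / (2 * t) + t * r / 2"
      using amgm[OF t, of r] ab by auto
  qed
  also have "\<dots> = (LINT r:{a..b}|lborel. zz r) / (2 * t) + (LINT r:{a..b}|lborel. t * r / 2)"
  proof -
    have i1: "set_integrable lborel {a..b} zz" by (rule borel_integrable_atLeastAtMost'[OF cont_sub[OF zz_cont ab(1)]])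
    have i2: "set_integrable lborel {a..b} (\<lambda>r. t * r / 2)"
      by (rule borel_integrable_atLeastAtMost') (auto intro!: continuous_intros)
    have "(LINT r:{a..b}|lborel. zz r / (2 * t) + t * r / 2) = (LINT r:{a..b}|lborel. zz r / (2 * t)) + (LINT r:{a..b}|lborel. t * r / 2)"
      by (rule set_integral_add(2)[OF set_integrable_divide[OF i1] i2])
    thus ?thesis by simp
  qed
  also have "(LINT r:{a..b}|lborel. t * r / 2) \<le> (LINT r:{a..b}|lborel. t * b / 2)"
  proof (rule set_integral_mono)
    show "set_integrable lborel {a..b} (\<lambda>r. t * r / 2)"
      by (rule borel_integrable_atLeastAtMost') (auto intro!: continuous_intros)
    show "set_integrable lborel {a..b} (\<lambda>r. t * b / 2)"
      by (rule borel_integrable_atLeastAtMost') (auto intro!: continuous_intros)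
    fix r assume "r \<in> {a..b}" thus "t * r / 2 \<le> t * b / 2" using t by auto
  qed
  also have "(LINT r:{a..b}|lborel. t * b / 2) = t * b / 2 * (b - a)"
  proof -
    have e1: "(LBINT r=a..b. t * b / 2) = t * b / 2 * (b - a)" by (rule interval_integral_const(2))
    show ?thesis using interval_integral_Icc[OF ab(2), of "\<lambda>r. t * b / 2"] e1 by metis
  qed
  also have "t * b / 2 * (b - a) \<le> t * b\<^sup>2 / 2"
    using ab t by (simp add: power2_eq_square mult_left_mono algebra_simps)
  finally show ?thesis using E by simp
qed

lemma Ev:
  assumes \<eta>: "\<eta> > 0"
  shows "\<exists>a1>0. \<forall>r. 0 < r \<longrightarrow> r \<le> a1 \<longrightarrow> rho r \<le> 4 * \<eta> * r"
proof -
  define s where "s = sqrt \<eta>"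
  have s: "s > 0" "s\<^sup>2 = \<eta>" using \<eta> by (auto simp: s_def)
  obtain b1 where b1: "b1 > 0" "\<And>a b. 0 < a \<Longrightarrow> b < b1 \<Longrightarrow> (LINT r:{a..b}|lborel. zz r) \<le> \<eta>"
    using small_near0[OF zz_int zz_nn \<eta>] by blast
  have main: "rho b \<le> 4 * \<eta> * b" if b: "0 < b" "b < b1" for b
  proof -
    have vb: "cmod (v b) \<le> 2 * s * b"
    proof (rule ccontr)
      assume "\<not> ?thesis"
      hence big: "cmod (v b) > 2 * s * b" by simp
      show False
      proof (rule NI0[OF rho_int rho_nonneg, of "s\<^sup>2 * b\<^sup>2" b])
        show "0 < s\<^sup>2 * b\<^sup>2" using s b \<eta> by simp
        show "0 < b" using b by simp
        fix a assume a: "0 < a" "a \<le> b"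
        define t where "t = s / b"
        have t: "t > 0" using s b by (simp add: t_def)
        have "cmod (v b - v a) \<le> (LINT r:{a..b}|lborel. zz r) / (2 * t) + t * b\<^sup>2 / 2"
          by (rule v_diff[OF a t])
        also have "\<dots> \<le> \<eta> / (2 * t) + t * b\<^sup>2 / 2"
          using b1(2)[OF a(1) b(2)] t by (simp add: divide_right_mono)
        also have "\<dots> = s * b" using s b unfolding t_def by (simp add: field_simps power2_eq_square)
        finally have "cmod (v b - v a) \<le> s * b" .
        moreover have "cmod (v b) \<le> cmod (v a) + cmod (v b - v a)"
          by (metis add.commute diff_add_cancel norm_triangle_ineq)
        ultimately have va: "cmod (v a) > s * b" using big by linarith
        have "(s * b)\<^sup>2 \<le> (cmod (v a))\<^sup>2" using va s b by (intro power_mono) auto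
        hence "s\<^sup>2 * b\<^sup>2 \<le> a * rho a" using norm_v[OF a(1)] by (simp add: power_mult_distrib)
        thus "s\<^sup>2 * b\<^sup>2 / a \<le> rho a" using a by (simp add: divide_le_eq mult.commute)
      qed
    qed
    have "(cmod (v b))\<^sup>2 \<le> (2 * s * b)\<^sup>2" using vb by (intro power_mono) auto
    hence "b * rho b \<le> 4 * \<eta> * b\<^sup>2" using norm_v[OF b(1)] s by (simp add: power_mult_distrib)
    thus ?thesis using b by (simp add: power2_eq_square mult.commute mult.left_commute)
  qed
  show ?thesis
    by (rule exI[of _ "b1 / 2"]) (use b1 main in auto)
qed

end

context wsetup1 begin

definition gt :: "real \<Rightarrow> real" where "gt r = - 3 / (4 * r) + r / 8"
definition gt' :: "real \<Rightarrow> real" where "gt' r = 3 / (4 * r\<^sup>2) + 1 / 8"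
definition PP :: "real \<Rightarrow> real" where "PP r = (cmod (w1 r))\<^sup>2 + ((of_int k)\<^sup>2 / r\<^sup>2 + r\<^sup>2) * (cmod (w r))\<^sup>2"

lemma gt_der: "r > 0 \<Longrightarrow> (gt has_real_derivative gt' r) (at r)"
  unfolding gt_def gt'_def by (auto intro!: derivative_eq_intros simp: power2_eq_square field_simps)

lemma gt'_cont: "continuous_on {0<..} gt'"
  unfolding gt'_def by (intro continuous_intros) auto

lemma gt_cont: "continuous_on {0<..} gt"
  unfolding gt_def by (intro continuous_intros) auto

lemma Bf_gt: "Bf gt r = drho r / 2 + (- 3 / (4 * r) + r / 8) * rho r"
  unfolding Bf_def gt_def drho_def by simp

lemma Bf_gt_ge: assumes r: "r > 0" shows "Bf gt r \<ge> Bf g0 r - 5 / 4 * (rho r / r)"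
proof -
  have "Bf gt r - (Bf g0 r - 5 / 4 * (rho r / r)) = r / 8 * rho r"
    unfolding Bf_def gt_def g0_def using r by (simp add: field_simps)
  moreover have "r / 8 * rho r \<ge> 0" using r rho_nonneg[of r] by simp
  ultimately show ?thesis by linarith
qed

lemma Jt_eq: assumes r: "r > 0"
  shows "Jf gt gt' r = (cmod (w1 r))\<^sup>2 / 2 + (cmod (w1 r + complex_of_real (2 * gt r) * w r))\<^sup>2 / 2
     + ((of_int k)\<^sup>2 - 5/8) * rho r / r\<^sup>2 + r\<^sup>2 * rho r / 32"
  unfolding Jf_def gt_def gt'_def pot_def drho_def rho_def cmod_power2 using r
  by (simp add: field_simps power2_eq_square)

lemma Jt_bound: assumes r: "r > 0" shows "PP r / 32 \<le> Jf gt gt' r"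
proof -
  have "PP r / 32 = (cmod (w1 r))\<^sup>2 / 32 + (of_int k)\<^sup>2 / 32 * rho r / r\<^sup>2 + r\<^sup>2 * rho r / 32"
    unfolding PP_def rho_def using r by (simp add: field_simps)
  moreover have "(of_int k)\<^sup>2 / 32 * rho r / r\<^sup>2 \<le> ((of_int k)\<^sup>2 - 5/8) * rho r / r\<^sup>2"
  proof -
    have "(of_int k)\<^sup>2 / 32 \<le> (of_int k)\<^sup>2 - (5/8::real)" using kk by simp
    thus ?thesis using rho_nonneg[of r] r by (intro divide_right_mono mult_right_mono) auto
  qed
  moreover have "(cmod (w1 r))\<^sup>2 / 32 \<le> (cmod (w1 r))\<^sup>2 / 2" by simp
  moreover have "0 \<le> (cmod (w1 r + complex_of_real (2 * gt r) * w r))\<^sup>2 / 2" by simp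
  ultimately show ?thesis unfolding Jt_eq[OF r] by linarith
qed

lemma PP_nn: "r > 0 \<Longrightarrow> PP r \<ge> 0" unfolding PP_def by simp

lemma PP_cont: "continuous_on {0<..} PP"
  unfolding PP_def by (intro continuous_intros w_cont w1_cont) auto

lemma final_int: "set_integrable lborel {0<..} (\<lambda>r. PP r / 32)" "(LINT r:{0<..}|lborel. PP r / 32) \<le> (LINT r:{0<..}|lborel. hh r)"
proof -
  have c: "continuous_on {0<..} (\<lambda>r. PP r / 32)" by (intro continuous_intros PP_cont) auto
  have nn: "\<And>r. r > 0 \<Longrightarrow> PP r / 32 \<ge> 0" using PP_nn by simp
  have Jc: "continuous_on {0<..} (Jf gt gt')" by (rule Jf_cont[OF gt_cont gt'_cont])
  have bd: "(LINT r:{a'..b'}|lborel. PP r / 32) \<le> (LINT r:{0<..}|lborel. hh r)" if ab': "0 < a'" "a' \<le> b'" for a' b'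
  proof (rule field_le_epsilon)
    fix \<epsilon> :: real assume e: "\<epsilon> > 0"
    obtain a0 b0 where ab0: "a0 > 0" "\<And>a b. 0 < a \<Longrightarrow> a \<le> a0 \<Longrightarrow> b0 \<le> b \<Longrightarrow>
        (LINT r:{a..b}|lborel. hh r) \<le> (LINT r:{0<..}|lborel. hh r) + \<epsilon>/4"
      using tail_bound[OF hh_glob, of "\<epsilon>/4"] e by auto
    obtain a1 where a1: "a1 > 0" "\<And>r. 0 < r \<Longrightarrow> r \<le> a1 \<Longrightarrow> rho r \<le> 4 * (\<epsilon>/20) * r"
      using Ev[of "\<epsilon>/20"] e by auto
    obtain a where a: "0 < a" "a < min (min a' a0) a1" "drho a / 2 + rho a / (2 * a) > - (\<epsilon>/4)"
      using E0[OF rho_int rho_nonneg rho_der, of "\<epsilon>/4" "min (min a' a0) a1"] e ab' ab0(1) a1(1) by auto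
    obtain b where b: "b > max b' b0" "drho b / 2 + (- 3 / (4 * b) + b / 8) * rho b < \<epsilon>/4"
      using E2inf[OF rho_int rho_nonneg rrho_int rho_der drho_cont, of "\<epsilon>/4" "max b' b0"] e by auto
    have ab: "0 < a" "a \<le> b" using a b ab' by auto
    have Ba: "Bf gt a \<ge> - (\<epsilon>/2)"
    proof -
      have "rho a \<le> 4 * (\<epsilon>/20) * a" using a1(2)[of a] a by auto
      hence "rho a / a \<le> \<epsilon>/5" using a(1) by (simp add: divide_le_eq)
      moreover have "Bf g0 a > - (\<epsilon>/4)" using a(3) unfolding Bf_g0 .
      ultimately show ?thesis using Bf_gt_ge[OF a(1)] by linarith
    qed
    have Bb: "Bf gt b < \<epsilon>/4" using b(2) unfolding Bf_gt .
    have cs: "continuous_on {a..b} f" if "continuous_on {0<..} f" for f :: "real \<Rightarrow> real"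
      using cont_sub[OF that ab(1)] .
    have "(LINT r:{a'..b'}|lborel. PP r / 32) \<le> (LINT r:{a'..b'}|lborel. Jf gt gt' r)"
    proof (rule set_integral_mono)
      show "set_integrable lborel {a'..b'} (\<lambda>r. PP r / 32)" by (rule borel_integrable_atLeastAtMost'[OF cont_sub[OF c ab'(1)]])
      show "set_integrable lborel {a'..b'} (Jf gt gt')" by (rule borel_integrable_atLeastAtMost'[OF cont_sub[OF Jc ab'(1)]])
      fix r assume "r \<in> {a'..b'}" thus "PP r / 32 \<le> Jf gt gt' r" using Jt_bound ab' by auto
    qed
    also have "\<dots> \<le> (LINT r:{a..b}|lborel. Jf gt gt' r)"
    proof (rule mono_interval_c[OF Jc])
      show "0 \<le> Jf gt gt' r" if "r > 0" for r using Jt_bound[OF that] PP_nn[OF that] by linarith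
    qed (use a b in auto)
    also have "\<dots> = (LINT r:{a..b}|lborel. hh r) - Bf gt a + Bf gt b"
      using identity[OF gt_der gt'_cont ab] by simp
    also have "(LINT r:{a..b}|lborel. hh r) \<le> (LINT r:{0<..}|lborel. hh r) + \<epsilon>/4"
      by (rule ab0(2)) (use a b in auto)
    finally show "(LINT r:{a'..b'}|lborel. PP r / 32) \<le> (LINT r:{0<..}|lborel. hh r) + \<epsilon>"
      using Ba Bb by linarith
  qed
  show "set_integrable lborel {0<..} (\<lambda>r. PP r / 32)" by (rule bounded_partials(1)[OF c nn bd])
  show "(LINT r:{0<..}|lborel. PP r / 32) \<le> (LINT r:{0<..}|lborel. hh r)" by (rule bounded_partials(2)[OF c nn bd])
qed

lemma final:
  "(1/32) * ((LINT r:{0<..}|lborel. (cmod (w1 r))\<^sup>2)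
          + (LINT r:{0<..}|lborel. (of_int k ^ 2 / r\<^sup>2 + r\<^sup>2) * (cmod (w r))\<^sup>2))
       \<le> Re (ip (Fop k \<beta> lam w w2) w)"
proof -
  have iP: "set_integrable lborel {0<..} PP"
    using set_integrable_mult_right[OF final_int(1), of 32] by simp
  have i1: "set_integrable lborel {0<..} (\<lambda>r. (cmod (w1 r))\<^sup>2)"
    by (rule int_by_bound[OF iP]) (auto intro!: continuous_intros w1_cont simp: PP_def)
  have i2: "set_integrable lborel {0<..} (\<lambda>r. (of_int k ^ 2 / r\<^sup>2 + r\<^sup>2) * (cmod (w r))\<^sup>2)"
    by (rule int_by_bound[OF iP]) (auto intro!: continuous_intros w_cont simp: PP_def)
  have "(LINT r:{0<..}|lborel. PP r) = (LINT r:{0<..}|lborel. (cmod (w1 r))\<^sup>2)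
          + (LINT r:{0<..}|lborel. (of_int k ^ 2 / r\<^sup>2 + r\<^sup>2) * (cmod (w r))\<^sup>2)"
    unfolding PP_def using set_integral_add(2)[OF i1 i2] .
  moreover have "(LINT r:{0<..}|lborel. PP r / 32) = (LINT r:{0<..}|lborel. PP r) / 32"
    by simp
  ultimately show ?thesis using final_int(2) ip_eq[of lam] by simp
qed

end

theorem lemma2p1:
  shows "\<exists>C>0. \<forall>(k::int) (\<beta>::real) (lam::real) w w1 w2.
     \<bar>k\<bar> \<ge> 1 \<longrightarrow> Dk k \<beta> w w1 w2 \<longrightarrow>
     C * ((LINT r:{0<..}|lborel. (cmod (w1 r))\<^sup>2)
          + (LINT r:{0<..}|lborel. (of_int k ^ 2 / r\<^sup>2 + r\<^sup>2) * (cmod (w r))\<^sup>2))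
       \<le> Re (ip (Fop k \<beta> lam w w2) w)"
proof (intro exI[of _ "1/32::real"] conjI allI impI)
  show "(0::real) < 1/32" by simp
  fix k :: int and \<beta> lam :: real and w w1 w2 :: "real \<Rightarrow> complex"
  assume k1: "\<bar>k\<bar> \<ge> 1" and D: "Dk k \<beta> w w1 w2"
  interpret wsetup1 k \<beta> w w1 w2
    using k1 D by (intro wsetup1.intro wsetup.intro wsetup1_axioms.intro)
  show "1/32 * ((LINT r:{0<..}|lborel. (cmod (w1 r))\<^sup>2)
          + (LINT r:{0<..}|lborel. (of_int k ^ 2 / r\<^sup>2 + r\<^sup>2) * (cmod (w r))\<^sup>2))
       \<le> Re (ip (Fop k \<beta> lam w w2) w)" by (rule final)
qed

end
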